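(* Let $F_n$ ($n\ge1$) and $F$ be distribution functions on $\mathbb{R}^d$ of random vectors satisfying condition $(\mathcal{H})$. Then $\|\mathbf{x}\|_{F_n}\to\|\mathbf{x}\|_F$ for every $\mathbf{x}\in\mathbb{R}^{d+1}$ if and only if $F_n\to F$ in the Wasserstein metric.
   Context: Condition $(\mathcal{H})$ on a random vector $\mathbf{X}=(X_1,\dots,X_d)$: each $X_i$ is almost surely nonnegative with $0<E(X_i)<\infty$. If $\mathbf{X}$ satisfies $(\mathcal{H})$ and has distribution function $F$, its $F$-norm is $\|\mathbf{x}\|_F:=E\big(\max(|x_0|,|x_1|X_1,\dots,|x_d|X_d)\big)$ for $\mathbf{x}=(x_0,\dots,x_d)\in\mathbb{R}^{d+1}$ (this depends only on $F$). The Wasserstein metric between distributions $P,Q$ on $\mathbb{R}^d$ with finite first moments is $d_W(P,Q)=\inf E(\|\mathbf{X}-\mathbf{Y}\|_1)$, the infimum over all random vectors $\mathbf{X}\sim P$, $\mathbf{Y}\sim Q$ on a common probability space, where $\|\cdot\|_1$ is the $L^1$-norm. *)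

theory Defs
  imports "HOL-Probability.Probability"
begin

text \<open>A distribution on R^d (d = CARD('n)) is a probability measure on the Borel sets
of real^'n.  Condition (H): each coordinate is a.s. nonnegative, integrable, with
positive expectation.\<close>

definition condH :: "(real ^ 'n::finite) measure \<Rightarrow> bool" where
  "condH P \<longleftrightarrow> prob_space P \<and> sets P = sets borel \<and>
     (\<forall>i. (AE y in P. 0 \<le> y $ i) \<and> integrable P (\<lambda>y. y $ i) \<and>
          0 < integral\<^sup>L P (\<lambda>y. y $ i))"

text \<open>The F-norm of x = (x0, x1, ..., xd), represented as the pair (x0, x).\<close>

definition Fnorm :: "(real ^ 'n::finite) measure \<Rightarrow> real \<Rightarrow> real ^ 'n \<Rightarrow> real" where
  "Fnorm P x0 x = integral\<^sup>L P (\<lambda>y. max \<bar>x0\<bar> (Max (range (\<lambda>i. \<bar>x $ i\<bar> * y $ i))))"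

definition l1norm :: "real ^ 'n::finite \<Rightarrow> real" where
  "l1norm z = (\<Sum>i\<in>UNIV. \<bar>z $ i\<bar>)"

definition couplings :: "(real ^ 'n::finite) measure \<Rightarrow> (real ^ 'n) measure
    \<Rightarrow> ((real ^ 'n) \<times> (real ^ 'n)) measure set" where
  "couplings P Q = {M. prob_space M \<and> sets M = sets borel \<and>
      distr M borel fst = P \<and> distr M borel snd = Q}"

definition wasserstein :: "(real ^ 'n::finite) measure \<Rightarrow> (real ^ 'n) measure \<Rightarrow> real" where
  "wasserstein P Q = (INF M \<in> couplings P Q. integral\<^sup>L M (\<lambda>(x, y). l1norm (x - y)))"

end

theory Submission
  imports Defs
begin

lemma condH_D:
  assumes "condH P"
  shows "prob_space P" "sets P = sets borel" "space P = UNIV"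
    "\<And>i. AE y in P. 0 \<le> y $ i" "\<And>i. integrable P (\<lambda>y. y $ i)"
  using assms unfolding condH_def by (auto dest: sets_eq_imp_space_eq)

lemma integral_le_of_nn:
  assumes "g \<in> borel_measurable M" "\<And>z. 0 \<le> g z" "(\<integral>\<^sup>+z. ennreal (g z) \<partial>M) \<le> ennreal r" "0 \<le> r"
  shows "integral\<^sup>L M g \<le> r"
proof (cases "integrable M g")
  case True
  then have "(\<integral>\<^sup>+z. ennreal (g z) \<partial>M) = ennreal (integral\<^sup>L M g)"
    using assms by (intro nn_integral_eq_integral) auto
  with assms(3,4) show ?thesis by (auto simp add: ennreal_le_iff2)
next
  case False then show ?thesis using assms by (simp add: not_integrable_integral_eq)
qed

lemma sets_pair_borel:
  assumes "sets P = sets (borel :: 'a::second_countable_topology measure)"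
    "sets Q = sets (borel :: 'b::second_countable_topology measure)"
  shows "sets (P \<Otimes>\<^sub>M Q) = sets (borel :: ('a \<times> 'b) measure)"
proof -
  have "sets (P \<Otimes>\<^sub>M Q) = sets (borel \<Otimes>\<^sub>M borel :: ('a \<times> 'b) measure)"
    using assms by (intro sets_pair_measure_cong) auto
  also have "\<dots> = sets borel" by (subst borel_prod) rule
  finally show ?thesis .
qed

lemma coupling_density:
  fixes P Q :: "(real^'n::finite) measure" and f :: "(real^'n) \<times> (real^'n) \<Rightarrow> real"
  assumes P: "prob_space P" "sets P = sets borel" and Q: "prob_space Q" "sets Q = sets borel"
  and fm: "f \<in> borel_measurable borel" and fnn: "\<And>z. 0 \<le> f z"
  and m1: "AE x in P. (\<integral>\<^sup>+y. ennreal (f (x,y)) \<partial>Q) = 1"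
  and m2: "AE y in Q. (\<integral>\<^sup>+x. ennreal (f (x,y)) \<partial>P) = 1"
  shows "density (P \<Otimes>\<^sub>M Q) (\<lambda>z. ennreal (f z)) \<in> couplings P Q"
proof -
  interpret P: prob_space P by fact
  interpret Q: prob_space Q by fact
  interpret PQ: pair_sigma_finite P Q ..
  define M where "M = density (P \<Otimes>\<^sub>M Q) (\<lambda>z. ennreal (f z))"
  have sPQ: "sets (P \<Otimes>\<^sub>M Q) = sets borel" using P Q by (intro sets_pair_borel) auto
  have sM: "sets M = sets borel" unfolding M_def using sPQ by simp
  have fm': "f \<in> borel_measurable (P \<Otimes>\<^sub>M Q)"
    using fm measurable_cong_sets[OF sPQ refl] by blast
  have fme: "(\<lambda>z. ennreal (f z)) \<in> borel_measurable (P \<Otimes>\<^sub>M Q)" using fm' by measurable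
  have spP: "space P = UNIV" using P(2) by (metis sets_eq_imp_space_eq space_borel)
  have spQ: "space Q = UNIV" using Q(2) by (metis sets_eq_imp_space_eq space_borel)
  have "fst \<in> borel_measurable (borel :: ((real^'n) \<times> (real^'n)) measure)"
    by (intro borel_measurable_continuous_onI continuous_intros)
  then have mfst: "fst \<in> measurable M borel" by (simp only: measurable_cong_sets[OF sM refl])
  have "snd \<in> borel_measurable (borel :: ((real^'n) \<times> (real^'n)) measure)"
    by (intro borel_measurable_continuous_onI continuous_intros)
  then have msnd: "snd \<in> measurable M borel" by (simp only: measurable_cong_sets[OF sM refl])
  have d1: "distr M borel fst = P"
  proof (rule measure_eqI)
    show "sets (distr M borel fst) = sets P" using P by simp
    fix A assume A: "A \<in> sets (distr M borel fst)"
    then have Ab: "A \<in> sets borel" by simp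
    have "fst -` A \<inter> space M = A \<times> UNIV" using sM by (auto dest: sets_eq_imp_space_eq)
    then have e1: "emeasure (distr M borel fst) A = emeasure M (A \<times> UNIV)"
      using A mfst by (simp add: emeasure_distr)
    have AU: "A \<times> UNIV \<in> sets (P \<Otimes>\<^sub>M Q)"
      using Ab P(2) spQ sets.top[of Q] by (intro pair_measureI) auto
    have "emeasure M (A \<times> UNIV) = (\<integral>\<^sup>+z. ennreal (f z) * indicator (A \<times> UNIV) z \<partial>(P \<Otimes>\<^sub>M Q))"
      unfolding M_def by (rule emeasure_density[OF fme AU])
    also have "\<dots> = (\<integral>\<^sup>+x. \<integral>\<^sup>+y. ennreal (f (x,y)) * indicator (A \<times> UNIV) (x,y) \<partial>Q \<partial>P)"
      using AU fm' by (intro Q.nn_integral_fst[symmetric]) (auto intro!: borel_measurable_indicator)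
    also have "\<dots> = (\<integral>\<^sup>+x. indicator A x * \<integral>\<^sup>+y. ennreal (f (x,y)) \<partial>Q \<partial>P)"
      by (intro nn_integral_cong) (auto simp: indicator_def)
    also have "\<dots> = (\<integral>\<^sup>+x. indicator A x \<partial>P)"
      using m1 by (intro nn_integral_cong_AE) auto
    also have "\<dots> = emeasure P A" using Ab P(2) by simp
    finally show "emeasure (distr M borel fst) A = emeasure P A" using e1 by simp
  qed
  have d2: "distr M borel snd = Q"
  proof (rule measure_eqI)
    show "sets (distr M borel snd) = sets Q" using Q by simp
    fix A assume A: "A \<in> sets (distr M borel snd)"
    then have Ab: "A \<in> sets borel" by simp
    have "snd -` A \<inter> space M = UNIV \<times> A" using sM by (auto dest: sets_eq_imp_space_eq)
    then have e1: "emeasure (distr M borel snd) A = emeasure M (UNIV \<times> A)"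
      using A msnd by (simp add: emeasure_distr)
    have AU: "UNIV \<times> A \<in> sets (P \<Otimes>\<^sub>M Q)"
      using Ab Q(2) spP sets.top[of P] by (intro pair_measureI) auto
    have "emeasure M (UNIV \<times> A) = (\<integral>\<^sup>+z. ennreal (f z) * indicator (UNIV \<times> A) z \<partial>(P \<Otimes>\<^sub>M Q))"
      unfolding M_def by (rule emeasure_density[OF fme AU])
    also have "\<dots> = (\<integral>\<^sup>+y. \<integral>\<^sup>+x. ennreal (f (x,y)) * indicator (UNIV \<times> A) (x,y) \<partial>P \<partial>Q)"
      using AU fm' by (intro PQ.nn_integral_snd[symmetric]) (auto intro!: borel_measurable_indicator)
    also have "\<dots> = (\<integral>\<^sup>+y. indicator A y * \<integral>\<^sup>+x. ennreal (f (x,y)) \<partial>P \<partial>Q)"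
      by (intro nn_integral_cong) (auto simp: indicator_def)
    also have "\<dots> = (\<integral>\<^sup>+y. indicator A y \<partial>Q)"
      using m2 by (intro nn_integral_cong_AE) auto
    also have "\<dots> = emeasure Q A" using Ab Q(2) by simp
    finally show "emeasure (distr M borel snd) A = emeasure Q A" using e1 by simp
  qed
  have "prob_space M"
  proof
    have "space M = fst -` UNIV \<inter> space M" by simp
    then have "emeasure M (space M) = emeasure (distr M borel fst) UNIV"
      using mfst by (simp add: emeasure_distr)
    also have "\<dots> = 1" using d1 spP P.emeasure_space_1 by simp
    finally show "emeasure M (space M) = 1" .
  qed
  then show ?thesis unfolding couplings_def using sM d1 d2 M_def by auto
qed


definition gF :: "real \<Rightarrow> real^'n::finite \<Rightarrow> real^'n \<Rightarrow> real" where
  "gF x0 x y = max \<bar>x0\<bar> (Max (range (\<lambda>i. \<bar>x $ i\<bar> * y $ i)))"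

lemma Fnorm_gF: "Fnorm P x0 x = integral\<^sup>L P (gF x0 x)"
  unfolding Fnorm_def gF_def ..

lemma gF_borel[measurable]: "gF x0 x \<in> borel_measurable borel"
proof -
  have "(\<lambda>y. Max ((\<lambda>i. \<bar>x $ i\<bar> * y $ i) ` UNIV)) \<in> borel_measurable borel"
    by (intro borel_measurable_Max borel_measurable_continuous_onI continuous_intros) auto
  then have "(\<lambda>y. gF x0 x y) \<in> borel_measurable borel" unfolding gF_def by measurable
  then show ?thesis by simp
qed

lemma l1norm_eq: "l1norm = (\<lambda>z. \<Sum>i\<in>UNIV. \<bar>z $ i\<bar>)"
  by (rule ext) (simp add: l1norm_def)

lemma l1norm_borel[measurable]: "l1norm \<in> borel_measurable borel"
  unfolding l1norm_eq by (intro borel_measurable_continuous_onI continuous_intros)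

lemma l1norm_nonneg: "0 \<le> l1norm z"
  unfolding l1norm_def by (intro sum_nonneg) auto

lemma abs_comp_le_l1: "\<bar>z $ i\<bar> \<le> l1norm z"
  unfolding l1norm_def by (rule member_le_sum) auto

lemma l1norm_triangle: "l1norm (a - b) \<le> l1norm a + l1norm b"
  unfolding l1norm_def by (simp add: sum.distrib[symmetric] sum_mono abs_triangle_ineq4)

lemma Max_range_diff_le:
  fixes u v :: "'i::finite \<Rightarrow> real"
  shows "Max (range u) - Max (range v) \<le> (\<Sum>i\<in>UNIV. \<bar>u i - v i\<bar>)"
proof -
  have "Max (range u) \<in> range u" by (intro Max_in) auto
  then obtain j where j: "Max (range u) = u j" by blast
  have "v j \<le> Max (range v)" by (intro Max_ge) auto
  then have "Max (range u) - Max (range v) \<le> \<bar>u j - v j\<bar>" using j by linarith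
  also have "\<dots> \<le> (\<Sum>i\<in>UNIV. \<bar>u i - v i\<bar>)"
    by (rule member_le_sum[of j UNIV "\<lambda>i. \<bar>u i - v i\<bar>"]) auto
  finally show ?thesis .
qed

definition CF :: "real^'n::finite \<Rightarrow> real" where
  "CF x = 1 + (\<Sum>i\<in>UNIV. \<bar>x $ i\<bar>)"

lemma CF_pos: "0 < CF x"
  unfolding CF_def by (smt (verit) sum_nonneg abs_ge_zero)

lemma gF_lip: "\<bar>gF x0 x y - gF x0 x z\<bar> \<le> CF x * l1norm (y - z)"
proof -
  let ?u = "\<lambda>i. \<bar>x $ i\<bar> * y $ i" and ?v = "\<lambda>i. \<bar>x $ i\<bar> * z $ i"
  have s: "(\<Sum>i\<in>UNIV. \<bar>?u i - ?v i\<bar>) \<le> CF x * l1norm (y - z)"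
  proof -
    have "(\<Sum>i\<in>UNIV. \<bar>?u i - ?v i\<bar>) = (\<Sum>i\<in>UNIV. \<bar>x $ i\<bar> * \<bar>(y - z) $ i\<bar>)"
      by (intro sum.cong) (auto simp: abs_mult right_diff_distrib[symmetric])
    also have "\<dots> \<le> (\<Sum>i\<in>UNIV. CF x * \<bar>(y - z) $ i\<bar>)"
    proof (intro sum_mono mult_right_mono)
      fix i
      have "\<bar>x $ i\<bar> \<le> (\<Sum>i\<in>UNIV. \<bar>x $ i\<bar>)" by (rule member_le_sum) auto
      then show "\<bar>x $ i\<bar> \<le> CF x" unfolding CF_def by linarith
    qed auto
    also have "\<dots> = CF x * l1norm (y - z)" unfolding l1norm_def by (simp add: sum_distrib_left)
    finally show ?thesis .
  qed
  have a: "Max (range ?u) - Max (range ?v) \<le> CF x * l1norm (y - z)"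
    using Max_range_diff_le[of ?u ?v] s by linarith
  have b: "Max (range ?v) - Max (range ?u) \<le> CF x * l1norm (y - z)"
    using Max_range_diff_le[of ?v ?u] s by (simp add: abs_minus_commute)
  show ?thesis unfolding gF_def using a b by (smt (verit))
qed

lemma gF_zero: "gF x0 x 0 = \<bar>x0\<bar>"
proof -
  have "range (\<lambda>i. \<bar>x $ i\<bar> * (0::real^'a) $ i) = {0}" by auto
  then show ?thesis by (simp add: gF_def)
qed

lemma gF_bound: "\<bar>gF x0 x y\<bar> \<le> \<bar>x0\<bar> + CF x * l1norm y"
  using gF_lip[of x0 x y 0] gF_zero[of x0 x] by simp

lemma l1norm_sum: "l1norm y = (\<Sum>i\<in>UNIV. \<bar>y $ i\<bar>)" unfolding l1norm_def ..

lemma condH_int_l1: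
  assumes "condH P" shows "integrable P l1norm"
  unfolding l1norm_eq by (intro Bochner_Integration.integrable_sum integrable_abs condH_D[OF assms])

lemma condH_int_gF:
  assumes "condH P" shows "integrable P (gF x0 x)"
proof (rule Bochner_Integration.integrable_bound)
  interpret P: prob_space P using condH_D[OF assms] by auto
  show "integrable P (\<lambda>y. \<bar>x0\<bar> + CF x * l1norm y)"
    using condH_int_l1[OF assms] condH_D[OF assms]
    by (intro Bochner_Integration.integrable_add integrable_mult_right P.integrable_const) auto
  have "sets P = sets borel" using condH_D[OF assms] by auto
  then show "gF x0 x \<in> borel_measurable P"
    using measurable_cong_sets[of P borel borel borel] gF_borel by auto
  show "AE y in P. norm (gF x0 x y) \<le> norm (\<bar>x0\<bar> + CF x * l1norm y)"
    using gF_bound[of x0 x] CF_pos[of x] l1norm_nonneg by (auto intro!: AE_I2 order_trans[OF _ abs_ge_self])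
qed

lemma product_coupling:
  assumes "condH P" "condH Q"
  shows "density (P \<Otimes>\<^sub>M Q) (\<lambda>z. ennreal 1) \<in> couplings P Q"
proof -
  interpret P: prob_space P using condH_D[OF assms(1)] by auto
  interpret Q: prob_space Q using condH_D[OF assms(2)] by auto
  have "density (P \<Otimes>\<^sub>M Q) (\<lambda>z. ennreal ((\<lambda>_. 1) z)) \<in> couplings P Q"
    using condH_D[OF assms(1)] condH_D[OF assms(2)]
    using P.emeasure_space_1 Q.emeasure_space_1 condH_D(3)[OF assms(1)] condH_D(3)[OF assms(2)]
    by (intro coupling_density) auto
  then show ?thesis by simp
qed

lemma couplings_ne: assumes "condH P" "condH Q" shows "couplings P Q \<noteq> {}"
  using product_coupling[OF assms] by blast

lemma coupling_facts:
  fixes P Q :: "(real^'n::finite) measure"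
  assumes P: "condH P" and Q: "condH Q" and M: "M \<in> couplings P Q"
  shows "prob_space M" "sets M = sets borel"
    "\<And>h::real^'n \<Rightarrow> real. h \<in> borel_measurable borel \<Longrightarrow> integral\<^sup>L P h = integral\<^sup>L M (\<lambda>z. h (fst z))"
    "\<And>h::real^'n \<Rightarrow> real. h \<in> borel_measurable borel \<Longrightarrow> integral\<^sup>L Q h = integral\<^sup>L M (\<lambda>z. h (snd z))"
    "\<And>h::real^'n \<Rightarrow> real. h \<in> borel_measurable borel \<Longrightarrow> integrable P h \<Longrightarrow> integrable M (\<lambda>z. h (fst z))"
    "\<And>h::real^'n \<Rightarrow> real. h \<in> borel_measurable borel \<Longrightarrow> integrable Q h \<Longrightarrow> integrable M (\<lambda>z. h (snd z))"
proof -
  show pM: "prob_space M" and sM: "sets M = sets borel" using M unfolding couplings_def by auto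
  have d1: "distr M borel fst = P" and d2: "distr M borel snd = Q" using M unfolding couplings_def by auto
  have "fst \<in> borel_measurable (borel :: ((real^'n) \<times> (real^'n)) measure)"
    by (intro borel_measurable_continuous_onI continuous_intros)
  then have mfst: "fst \<in> measurable M borel" by (simp only: measurable_cong_sets[OF sM refl])
  have "snd \<in> borel_measurable (borel :: ((real^'n) \<times> (real^'n)) measure)"
    by (intro borel_measurable_continuous_onI continuous_intros)
  then have msnd: "snd \<in> measurable M borel" by (simp only: measurable_cong_sets[OF sM refl])
  fix h :: "real^'n \<Rightarrow> real" assume h: "h \<in> borel_measurable borel"
  show "integral\<^sup>L P h = integral\<^sup>L M (\<lambda>z. h (fst z))"
    using integral_distr[OF mfst h] d1 by simp
  show "integral\<^sup>L Q h = integral\<^sup>L M (\<lambda>z. h (snd z))"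
    using integral_distr[OF msnd h] d2 by simp
  show "integrable P h \<Longrightarrow> integrable M (\<lambda>z. h (fst z))"
    using integrable_distr_eq[OF mfst h] d1 by simp
  show "integrable Q h \<Longrightarrow> integrable M (\<lambda>z. h (snd z))"
    using integrable_distr_eq[OF msnd h] d2 by simp
qed

definition cost :: "((real^'n::finite) \<times> (real^'n)) \<Rightarrow> real" where
  "cost z = l1norm (fst z - snd z)"

lemma cost_borel[measurable]: "cost \<in> borel_measurable borel"
proof -
  have "(\<lambda>z. l1norm (fst z - snd z)) \<in> borel_measurable (borel :: ((real^'n) \<times> (real^'n)) measure)"
    by (intro measurable_compose[OF _ l1norm_borel] borel_measurable_continuous_onI continuous_intros)
  then show ?thesis by (simp add: cost_def[abs_def])
qed

lemma wasserstein_cost: "wasserstein P Q = (INF M \<in> couplings P Q. integral\<^sup>L M cost)"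
  unfolding wasserstein_def cost_def by (simp add: case_prod_beta')

lemma cost_integrable:
  assumes P: "condH P" and Q: "condH Q" and M: "M \<in> couplings P Q"
  shows "integrable M cost"
proof (rule Bochner_Integration.integrable_bound)
  note cf = coupling_facts[OF P Q M]
  show "integrable M (\<lambda>z. l1norm (fst z) + l1norm (snd z))"
    using cf(5)[OF l1norm_borel condH_int_l1[OF P]] cf(6)[OF l1norm_borel condH_int_l1[OF Q]]
    by auto
  show "cost \<in> borel_measurable M" using cf(2) measurable_cong_sets[of M borel borel borel] by auto
  show "AE z in M. norm (cost z) \<le> norm (l1norm (fst z) + l1norm (snd z))"
    by (intro AE_I2) (auto simp: cost_def l1norm_nonneg l1norm_triangle)
qed

lemma cost_nonneg: "0 \<le> cost z" unfolding cost_def by (rule l1norm_nonneg)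

lemma wasserstein_le:
  assumes "condH P" "condH Q" "M \<in> couplings P Q"
  shows "wasserstein P Q \<le> integral\<^sup>L M cost"
  unfolding wasserstein_cost
  by (rule cINF_lower[OF _ assms(3)]) (auto intro!: bdd_belowI[of _ 0] Bochner_Integration.integral_nonneg cost_nonneg)

lemma wasserstein_nonneg:
  assumes "condH P" "condH Q"
  shows "0 \<le> wasserstein P Q"
  unfolding wasserstein_cost
  using couplings_ne[OF assms] by (intro cINF_greatest) (auto intro!: Bochner_Integration.integral_nonneg cost_nonneg)

lemma Fnorm_diff_le:
  assumes P: "condH P" and Q: "condH Q"
  shows "\<bar>Fnorm P x0 x - Fnorm Q x0 x\<bar> \<le> CF x * wasserstein P Q"
proof -
  have "\<bar>Fnorm P x0 x - Fnorm Q x0 x\<bar> / CF x \<le> wasserstein P Q"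
    unfolding wasserstein_cost
  proof (intro cINF_greatest couplings_ne[OF P Q])
    fix M assume M: "M \<in> couplings P Q"
    note cf = coupling_facts[OF P Q M]
    have i1: "integrable M (\<lambda>z. gF x0 x (fst z))" by (rule cf(5)[OF gF_borel condH_int_gF[OF P]])
    have i2: "integrable M (\<lambda>z. gF x0 x (snd z))" by (rule cf(6)[OF gF_borel condH_int_gF[OF Q]])
    have "Fnorm P x0 x - Fnorm Q x0 x = integral\<^sup>L M (\<lambda>z. gF x0 x (fst z) - gF x0 x (snd z))"
      unfolding Fnorm_gF cf(3)[OF gF_borel] cf(4)[OF gF_borel] using i1 i2 by simp
    also have "\<bar>\<dots>\<bar> \<le> integral\<^sup>L M (\<lambda>z. \<bar>gF x0 x (fst z) - gF x0 x (snd z)\<bar>)"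
      by (rule integral_abs_bound[unfolded real_norm_def])
    also have "\<dots> \<le> integral\<^sup>L M (\<lambda>z. CF x * cost z)"
    proof (rule integral_mono)
      show "integrable M (\<lambda>z. \<bar>gF x0 x (fst z) - gF x0 x (snd z)\<bar>)" using i1 i2 by auto
      show "integrable M (\<lambda>z. CF x * cost z)" using cost_integrable[OF P Q M] by auto
      show "\<And>z. \<bar>gF x0 x (fst z) - gF x0 x (snd z)\<bar> \<le> CF x * cost z"
        unfolding cost_def by (rule gF_lip)
    qed
    also have "\<dots> = CF x * integral\<^sup>L M cost" by simp
    finally show "\<bar>Fnorm P x0 x - Fnorm Q x0 x\<bar> / CF x \<le> integral\<^sup>L M cost"
      using CF_pos[of x] by (simp add: divide_le_eq mult.commute)
  qed
  then show ?thesis using CF_pos[of x] by (simp add: divide_le_eq mult.commute)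
qed

lemma direction_back:
  assumes H: "\<And>n. condH (Fs n)" "condH F"
    and W: "(\<lambda>n. wasserstein (Fs n) F) \<longlonglongrightarrow> 0"
  shows "(\<lambda>n. Fnorm (Fs n) x0 x) \<longlonglongrightarrow> Fnorm F x0 x"
proof -
  have "(\<lambda>n. Fnorm (Fs n) x0 x - Fnorm F x0 x) \<longlonglongrightarrow> 0"
  proof (rule Lim_null_comparison)
    show "\<forall>\<^sub>F n in sequentially. norm (Fnorm (Fs n) x0 x - Fnorm F x0 x) \<le> CF x * wasserstein (Fs n) F"
      using Fnorm_diff_le[OF H(1) H(2)] by auto
    show "(\<lambda>n. CF x * wasserstein (Fs n) F) \<longlonglongrightarrow> 0"
      using tendsto_mult_right_zero[OF W] by simp
  qed
  then show ?thesis by (rule LIM_zero_cancel)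
qed


lemma measure_le_integral:
  fixes f :: "'a \<Rightarrow> real"
  assumes "prob_space M" "A \<in> sets M" "integrable M f" "\<And>x. x \<in> space M \<Longrightarrow> indicator A x \<le> f x"
  shows "measure M A \<le> integral\<^sup>L M f"
proof -
  interpret prob_space M by fact
  have "measure M A = integral\<^sup>L M (indicator A)" using assms(2) by (simp add: Int_absorb2 sets.sets_into_space)
  also have "\<dots> \<le> integral\<^sup>L M f"
    using assms(2,3,4) by (intro integral_mono) (auto intro!: integrable_real_indicator simp: emeasure_eq_measure)
  finally show ?thesis .
qed

lemma integral_le_measure:
  fixes f :: "'a \<Rightarrow> real"
  assumes "prob_space M" "A \<in> sets M" "integrable M f" "\<And>x. x \<in> space M \<Longrightarrow> f x \<le> indicator A x"
  shows "integral\<^sup>L M f \<le> measure M A"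
proof -
  interpret prob_space M by fact
  have "integral\<^sup>L M f \<le> integral\<^sup>L M (indicator A)"
    using assms(2,3,4) by (intro integral_mono) (auto intro!: integrable_real_indicator simp: emeasure_eq_measure)
  also have "\<dots> = measure M A" using assms(2) by (simp add: Int_absorb2 sets.sets_into_space)
  finally show ?thesis .
qed

definition php :: "real \<Rightarrow> real \<Rightarrow> real" where
  "php \<eta> z = (max (1 + \<eta>) z - max 1 z) / \<eta>"
definition phm :: "real \<Rightarrow> real \<Rightarrow> real" where
  "phm \<eta> z = (max 1 z - max (1 - \<eta>) z) / \<eta>"

lemma php_bounds:
  assumes "0 < \<eta>"
  shows "indicator {z. z \<le> 1} z \<le> php \<eta> z" "php \<eta> z \<le> indicator {z. z \<le> 1 + \<eta>} z"
  using assms by (auto simp: php_def indicator_def field_simps)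

lemma phm_bounds:
  assumes "0 < \<eta>"
  shows "indicator {z. z \<le> 1 - \<eta>} z \<le> phm \<eta> z" "phm \<eta> z \<le> indicator {z. z \<le> 1} z"
  using assms by (auto simp: phm_def indicator_def field_simps)

lemma cdf_conv_generic:
  fixes M :: "nat \<Rightarrow> 'a measure" and N :: "'a measure" and Z :: "'a \<Rightarrow> real"
  assumes PM: "\<And>n. prob_space (M n)" and PN: "prob_space N"
   and ZM: "\<And>n. Z \<in> borel_measurable (M n)" and ZN: "Z \<in> borel_measurable N"
   and IM: "\<And>n t. 0 < t \<Longrightarrow> integrable (M n) (\<lambda>y. max t (Z y))"
   and IN: "\<And>t. 0 < t \<Longrightarrow> integrable N (\<lambda>y. max t (Z y))"
   and conv: "\<And>t. 0 < t \<Longrightarrow> (\<lambda>n. \<integral>y. max t (Z y) \<partial>M n) \<longlonglongrightarrow> (\<integral>y. max t (Z y) \<partial>N)"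
   and atom: "measure N {y \<in> space N. Z y = 1} = 0"
  shows "(\<lambda>n. measure (M n) {y \<in> space (M n). Z y \<le> 1}) \<longlonglongrightarrow> measure N {y \<in> space N. Z y \<le> 1}"
proof -
  interpret N: prob_space N by fact
  define p where "p = measure N {y \<in> space N. Z y \<le> 1}"
  define A where "A m = {y \<in> space N. Z y \<le> 1 + 1 / (real m + 2)}" for m :: nat
  define B where "B m = {y \<in> space N. Z y \<le> 1 - 1 / (real m + 2)}" for m :: nat
  have setsN: "{y \<in> space N. Z y \<le> c} \<in> sets N" for c using ZN by measurable
  have setsM: "{y \<in> space (M n). Z y \<le> c} \<in> sets (M n)" for n c using ZM[of n] by measurable
  have "(\<lambda>m. measure N (A m)) \<longlonglongrightarrow> measure N (\<Inter>m. A m)"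
  proof (rule N.finite_Lim_measure_decseq)
    show "range A \<subseteq> sets N" using setsN unfolding A_def by auto
    show "decseq A" unfolding A_def decseq_def
      by (auto simp: frac_le elim!: order_trans)
  qed
  moreover have "(\<Inter>m. A m) = {y \<in> space N. Z y \<le> 1}"
  proof (auto simp: A_def)
    fix y assume y: "\<forall>m. Z y \<le> 1 + 1 / (real m + 2)"
    show "Z y \<le> 1"
    proof (rule ccontr)
      assume "\<not> Z y \<le> 1"
      then obtain m :: nat where "1 / (Z y - 1) < real m" using reals_Archimedean2 by blast
      then have "1 / (real m + 2) < Z y - 1" using \<open>\<not> Z y \<le> 1\<close>
        by (auto simp: field_simps)
      then show False using y[rule_format, of m] by linarith
    qed
  qed (auto intro: order_trans[OF _ less_imp_le[OF less_add_same_cancel1[THEN iffD2]]] simp: add_increasing)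
  ultimately have limA: "(\<lambda>m. measure N (A m)) \<longlonglongrightarrow> p" unfolding p_def by simp
  have "(\<lambda>m. measure N (B m)) \<longlonglongrightarrow> measure N (\<Union>m. B m)"
  proof (rule N.finite_Lim_measure_incseq)
    show "range B \<subseteq> sets N" using setsN unfolding B_def by auto
    show "incseq B" unfolding B_def incseq_def
      by (auto simp: frac_le elim!: order_trans)
  qed
  moreover have "(\<Union>m. B m) = {y \<in> space N. Z y < 1}"
  proof (auto simp: B_def)
    fix y assume y: "y \<in> space N" "Z y < 1"
    obtain m :: nat where "1 / (1 - Z y) < real m" using reals_Archimedean2 by blast
    then have "Z y \<le> 1 - 1 / (real m + 2)" using y by (auto simp: field_simps)
    then show "\<exists>m. Z y \<le> 1 - 1 / (real m + 2)" by blast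
  next
    fix y m assume "Z y \<le> 1 - 1 / (real m + 2)"
    moreover have "0 < 1 / (real m + 2)" by auto
    ultimately show "Z y < 1" by linarith
  qed
  moreover have "measure N {y \<in> space N. Z y < 1} = p"
  proof -
    have "{y \<in> space N. Z y \<le> 1} = {y \<in> space N. Z y < 1} \<union> {y \<in> space N. Z y = 1}" by auto
    then have "p = measure N {y \<in> space N. Z y < 1} + measure N {y \<in> space N. Z y = 1}"
      unfolding p_def using ZN by (subst N.finite_measure_Union[symmetric]) (auto, measurable)
    then show ?thesis using atom by simp
  qed
  ultimately have limB: "(\<lambda>m. measure N (B m)) \<longlonglongrightarrow> p" by simp
  show ?thesis
    unfolding p_def[symmetric]
  proof (rule LIMSEQ_I)
    fix r :: real assume r: "0 < r"
    obtain m1 where m1: "\<And>m. m \<ge> m1 \<Longrightarrow> \<bar>measure N (A m) - p\<bar> < r / 2"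
      using LIMSEQ_D[OF limA, of "r/2"] r by auto
    obtain m2 where m2: "\<And>m. m \<ge> m2 \<Longrightarrow> \<bar>measure N (B m) - p\<bar> < r / 2"
      using LIMSEQ_D[OF limB, of "r/2"] r by auto
    define m where "m = max m1 m2"
    define \<eta> where "\<eta> = 1 / (real m + 2)"
    have \<eta>: "0 < \<eta>" "\<eta> \<le> 1/2" unfolding \<eta>_def by (auto simp: field_simps)
    have "\<bar>measure N (A m) - p\<bar> < r / 2" by (rule m1) (simp add: m_def)
    then have hA: "measure N (A m) < p + r / 2" by (simp only: abs_less_iff) linarith
    have "\<bar>measure N (B m) - p\<bar> < r / 2" by (rule m2) (simp add: m_def)
    then have hB: "measure N (B m) > p - r / 2" by (simp only: abs_less_iff) linarith
    define Ip where "Ip K = (\<integral>y. max (1 + \<eta>) (Z y) \<partial>K) / \<eta> - (\<integral>y. max 1 (Z y) \<partial>K) / \<eta>" for K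
    define Im where "Im K = (\<integral>y. max 1 (Z y) \<partial>K) / \<eta> - (\<integral>y. max (1 - \<eta>) (Z y) \<partial>K) / \<eta>" for K
    have Ip_eq: "Ip K = integral\<^sup>L K (\<lambda>y. php \<eta> (Z y))"
      if "integrable K (\<lambda>y. max (1 + \<eta>) (Z y))" "integrable K (\<lambda>y. max 1 (Z y))" for K
      unfolding Ip_def php_def using that by (simp add: diff_divide_distrib)
    have Im_eq: "Im K = integral\<^sup>L K (\<lambda>y. phm \<eta> (Z y))"
      if "integrable K (\<lambda>y. max (1 - \<eta>) (Z y))" "integrable K (\<lambda>y. max 1 (Z y))" for K
      unfolding Im_def phm_def using that by (simp add: diff_divide_distrib)
    have t1: "0 < 1 + \<eta>" "0 < (1::real)" "0 < 1 - \<eta>" using \<eta> by auto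
    have cp: "(\<lambda>n. Ip (M n)) \<longlonglongrightarrow> Ip N"
      unfolding Ip_def using \<eta> by (intro tendsto_intros conv t1) auto
    have cm: "(\<lambda>n. Im (M n)) \<longlonglongrightarrow> Im N"
      unfolding Im_def using \<eta> by (intro tendsto_intros conv t1) auto
    obtain n1 where n1: "\<And>n. n \<ge> n1 \<Longrightarrow> \<bar>Ip (M n) - Ip N\<bar> < r / 2"
      using LIMSEQ_D[OF cp, of "r/2"] r by auto
    obtain n2 where n2: "\<And>n. n \<ge> n2 \<Longrightarrow> \<bar>Im (M n) - Im N\<bar> < r / 2"
      using LIMSEQ_D[OF cm, of "r/2"] r by auto
    have IpN: "Ip N \<le> measure N (A m)"
    proof -
      have "Ip N = integral\<^sup>L N (\<lambda>y. php \<eta> (Z y))" using IN t1 by (intro Ip_eq) auto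
      also have "\<dots> \<le> measure N (A m)" unfolding A_def \<eta>_def[symmetric]
      proof (rule integral_le_measure[OF PN setsN])
        show "integrable N (\<lambda>y. php \<eta> (Z y))" unfolding php_def using IN t1 by auto
        show "php \<eta> (Z x) \<le> indicator {y \<in> space N. Z y \<le> 1 + \<eta>} x" if "x \<in> space N" for x
          using php_bounds(2)[OF \<eta>(1), of "Z x"] that by (auto simp: indicator_def)
      qed
      finally show ?thesis .
    qed
    have ImN: "measure N (B m) \<le> Im N"
    proof -
      have "measure N (B m) \<le> integral\<^sup>L N (\<lambda>y. phm \<eta> (Z y))" unfolding B_def \<eta>_def[symmetric]
      proof (rule measure_le_integral[OF PN setsN])
        show "integrable N (\<lambda>y. phm \<eta> (Z y))" unfolding phm_def using IN t1 by auto
        show "indicator {y \<in> space N. Z y \<le> 1 - \<eta>} x \<le> phm \<eta> (Z x)" if "x \<in> space N" for x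
          using phm_bounds(1)[OF \<eta>(1), of "Z x"] that by (auto simp: indicator_def)
      qed
      also have "\<dots> = Im N" using IN t1 by (intro Im_eq[symmetric]) auto
      finally show ?thesis .
    qed
    show "\<exists>no. \<forall>n\<ge>no. norm (measure (M n) {y \<in> space (M n). Z y \<le> 1} - p) < r"
    proof (intro exI allI impI)
      fix n assume n: "max n1 n2 \<le> n"
      have up: "measure (M n) {y \<in> space (M n). Z y \<le> 1} \<le> Ip (M n)"
      proof -
        have "measure (M n) {y \<in> space (M n). Z y \<le> 1} \<le> integral\<^sup>L (M n) (\<lambda>y. php \<eta> (Z y))"
        proof (rule measure_le_integral[OF PM setsM])
          show "integrable (M n) (\<lambda>y. php \<eta> (Z y))" unfolding php_def using IM t1 by auto
          show "indicator {y \<in> space (M n). Z y \<le> 1} x \<le> php \<eta> (Z x)" if "x \<in> space (M n)" for x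
            using php_bounds(1)[OF \<eta>(1), of "Z x"] that by (auto simp: indicator_def)
        qed
        also have "\<dots> = Ip (M n)" using IM t1 by (intro Ip_eq[symmetric]) auto
        finally show ?thesis .
      qed
      have lo: "Im (M n) \<le> measure (M n) {y \<in> space (M n). Z y \<le> 1}"
      proof -
        have "Im (M n) = integral\<^sup>L (M n) (\<lambda>y. phm \<eta> (Z y))" using IM t1 by (intro Im_eq) auto
        also have "\<dots> \<le> measure (M n) {y \<in> space (M n). Z y \<le> 1}"
        proof (rule integral_le_measure[OF PM setsM])
          show "integrable (M n) (\<lambda>y. phm \<eta> (Z y))" unfolding phm_def using IM t1 by auto
          show "phm \<eta> (Z x) \<le> indicator {y \<in> space (M n). Z y \<le> 1} x" if "x \<in> space (M n)" for x
            using phm_bounds(2)[OF \<eta>(1), of "Z x"] that by (auto simp: indicator_def)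
        qed
        finally show ?thesis .
      qed
      have "\<bar>Ip (M n) - Ip N\<bar> < r / 2" using n1[of n] n by auto
      moreover have "\<bar>Im (M n) - Im N\<bar> < r / 2" using n2[of n] n by auto
      ultimately show "norm (measure (M n) {y \<in> space (M n). Z y \<le> 1} - p) < r"
        using up lo IpN ImN hA hB unfolding real_norm_def abs_less_iff by linarith
    qed
  qed
qed


definition box :: "real^'n::finite \<Rightarrow> (real^'n) set" where
  "box c = {y. \<forall>i. y $ i \<le> c $ i}"

definition good :: "(real^'n::finite) measure \<Rightarrow> real^'n \<Rightarrow> bool" where
  "good F c \<longleftrightarrow> (\<forall>i. c $ i < 0 \<or> (0 < c $ i \<and> measure F {y. y $ i = c $ i} = 0))"

lemma vec_nth_borel[measurable]: "(\<lambda>y::real^'n::finite. y $ i) \<in> borel_measurable borel"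
  by (intro borel_measurable_continuous_onI continuous_intros)

lemma box_borel[measurable]: "box c \<in> sets borel"
  unfolding box_def by measurable

lemma eq_borel[measurable]: "{y::real^'n::finite. y $ i = a} \<in> sets borel"
  by measurable

lemma condH_sets:
  assumes "condH P" "A \<in> sets borel" shows "A \<in> sets P"
  using condH_D(2)[OF assms(1)] assms(2) by simp

lemma condH_meas:
  assumes "condH P" "f \<in> borel_measurable borel" shows "f \<in> borel_measurable P"
  using condH_D(2)[OF assms(1)] assms(2) measurable_cong_sets[of P borel borel borel] by auto

lemma box_neg_zero:
  assumes "condH P" "c $ i < 0"
  shows "measure P (box c) = 0"
proof -
  have "AE y in P. \<not> y \<in> box c"
    using condH_D(4)[OF assms(1), of i]
    by eventually_elim (use assms(2) in \<open>auto simp: box_def not_le intro!: exI[of _ i]\<close>)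
  from emeasure_eq_0_AE[OF this] show ?thesis
    using condH_D(3)[OF assms(1)] by (simp add: measure_def)
qed

lemma box_conv:
  fixes Fs :: "nat \<Rightarrow> (real ^ 'n::finite) measure" and F :: "(real ^ 'n) measure"
  assumes H: "\<And>n. condH (Fs n)" "condH F"
    and FN: "\<forall>x0 x. (\<lambda>n. Fnorm (Fs n) x0 x) \<longlonglongrightarrow> Fnorm F x0 x"
    and g: "good F c"
  shows "(\<lambda>n. measure (Fs n) (box c)) \<longlonglongrightarrow> measure F (box c)"
proof (cases "\<exists>i. c $ i < 0")
  case True
  then obtain i where "c $ i < 0" by auto
  then show ?thesis using box_neg_zero[OF H(1)] box_neg_zero[OF H(2)] by simp
next
  case False
  then have cpos: "\<And>i. 0 < c $ i" and cat: "\<And>i. measure F {y. y $ i = c $ i} = 0"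
    using g unfolding good_def by (metis not_less)+
  define x :: "real^'n" where "x = (\<chi> i. 1 / c $ i)"
  define Z where "Z y = Max (range (\<lambda>i. \<bar>x $ i\<bar> * y $ i))" for y :: "real^'n"
  have Zb: "Z \<in> borel_measurable borel" unfolding Z_def
    by (intro borel_measurable_Max borel_measurable_continuous_onI continuous_intros) auto
  have gZ: "gF t x y = max t (Z y)" if "0 < t" for t y
    unfolding gF_def Z_def using that by simp
  have gZ': "gF t x = (\<lambda>y. max t (Z y))" if "0 < t" for t
    using gZ[OF that] by (rule ext)
  have Zle: "Z y \<le> 1 \<longleftrightarrow> y \<in> box c" for y
  proof -
    have "Z y \<le> 1 \<longleftrightarrow> (\<forall>i. \<bar>x $ i\<bar> * y $ i \<le> 1)" unfolding Z_def by (subst Max_le_iff) auto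
    also have "\<dots> \<longleftrightarrow> (\<forall>i. y $ i \<le> c $ i)"
      using cpos by (auto simp: x_def field_simps abs_of_pos)
    finally show ?thesis unfolding box_def by simp
  qed
  have Zeq: "{y. Z y = 1} \<subseteq> (\<Union>i. {y. y $ i = c $ i})"
  proof
    fix y assume "y \<in> {y. Z y = 1}"
    then have "Z y = 1" by simp
    have "Z y \<in> range (\<lambda>i. \<bar>x $ i\<bar> * y $ i)" unfolding Z_def by (intro Max_in) auto
    then obtain j where "Z y = \<bar>x $ j\<bar> * y $ j" by blast
    then have "y $ j = c $ j" using \<open>Z y = 1\<close> cpos[of j] by (auto simp: x_def field_simps abs_of_pos)
    then show "y \<in> (\<Union>i. {y. y $ i = c $ i})" by blast
  qed
  have spF: "space F = UNIV" and spM: "\<And>n. space (Fs n) = UNIV" using condH_D(3) H by auto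
  have ZM: "Z \<in> borel_measurable (Fs n)" for n
    using condH_meas[OF H(1) Zb] .
  have ZN: "Z \<in> borel_measurable F"
    using condH_meas[OF H(2) Zb] .
  have "(\<lambda>n. measure (Fs n) {y \<in> space (Fs n). Z y \<le> 1}) \<longlonglongrightarrow> measure F {y \<in> space F. Z y \<le> 1}"
  proof (rule cdf_conv_generic)
    show "prob_space (Fs n)" for n using condH_D(1) H by auto
    show "prob_space F" using condH_D(1) H by auto
    show "Z \<in> borel_measurable (Fs n)" for n by (rule ZM)
    show "Z \<in> borel_measurable F" by (rule ZN)
    show "integrable (Fs n) (\<lambda>y. max t (Z y))" if "0 < t" for n t
      using condH_int_gF[OF H(1)[of n], of t x] unfolding gZ'[OF that] .
    show "integrable F (\<lambda>y. max t (Z y))" if "0 < t" for t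
      using condH_int_gF[OF H(2), of t x] unfolding gZ'[OF that] .
    show "(\<lambda>n. \<integral>y. max t (Z y) \<partial>Fs n) \<longlonglongrightarrow> (\<integral>y. max t (Z y) \<partial>F)" if "0 < t" for t
      using FN[rule_format, of t x] unfolding Fnorm_gF gZ'[OF that] .
    show "measure F {y \<in> space F. Z y = 1} = 0"
    proof -
      interpret F: prob_space F using condH_D(1) H by auto
      have "measure F {y \<in> space F. Z y = 1} \<le> measure F (\<Union>i. {y. y $ i = c $ i})"
        using Zeq spF by (intro F.finite_measure_mono) (auto intro!: condH_sets[OF H(2)])
      also have "\<dots> \<le> (\<Sum>i\<in>UNIV. measure F {y. y $ i = c $ i})"
        by (intro measure_UNION_le) (auto intro!: condH_sets[OF H(2)])
      also have "\<dots> = 0" using cat by simp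
      finally show ?thesis using measure_nonneg[of F "{y \<in> space F. Z y = 1}"] by linarith
    qed
  qed
  then show ?thesis using Zle spF spM by (simp add: box_def[symmetric])
qed


definition vmin :: "real^'n::finite \<Rightarrow> real^'n \<Rightarrow> real^'n" where
  "vmin a b = (\<chi> k. min (a $ k) (b $ k))"

lemma box_Int: "box a \<inter> box b = box (vmin a b)"
  unfolding box_def vmin_def by auto

lemma good_vmin: "good F a \<Longrightarrow> good F b \<Longrightarrow> good F (vmin a b)"
  unfolding good_def vmin_def by (auto simp: min_def)

lemma union_conv:
  fixes Fs :: "nat \<Rightarrow> (real ^ 'n::finite) measure" and F :: "(real ^ 'n) measure"
  assumes H: "\<And>n. condH (Fs n)" "condH F"
    and FN: "\<forall>x0 x. (\<lambda>n. Fnorm (Fs n) x0 x) \<longlonglongrightarrow> Fnorm F x0 x"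
    and I: "finite I"
  shows "\<forall>c. (\<forall>i\<in>I. good F (c i)) \<longrightarrow>
     (\<lambda>n. measure (Fs n) (\<Union>i\<in>I. box (c i))) \<longlonglongrightarrow> measure F (\<Union>i\<in>I. box (c i))"
  using I
proof (induction I rule: finite_induct)
  case empty
  then show ?case by simp
next
  case (insert j I)
  show ?case
  proof (intro allI impI)
    fix c :: "'a \<Rightarrow> real^'n" assume g: "\<forall>i\<in>insert j I. good F (c i)"
    let ?U = "\<Union>i\<in>I. box (c i)"
    have eq: "(\<Union>i\<in>insert j I. box (c i)) = box (c j) \<union> ?U" by auto
    have eq2: "?U \<inter> box (c j) = (\<Union>i\<in>I. box (vmin (c j) (c i)))" using box_Int by auto
    have meas: "measure P (box (c j) \<union> ?U) = measure P (box (c j)) + measure P ?U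
        - measure P (\<Union>i\<in>I. box (vmin (c j) (c i)))" if "condH P" for P
    proof -
      interpret prob_space P using condH_D(1)[OF that] .
      have s1: "box (c j) \<in> sets P" using condH_sets[OF that] by auto
      have s2: "?U \<in> sets P" using condH_sets[OF that] insert(1) by auto
      show ?thesis using finite_measure_Union'[OF s1 s2] finite_measure_Diff'[OF s2 s1] eq2 by simp
    qed
    have c1: "(\<lambda>n. measure (Fs n) (box (c j))) \<longlonglongrightarrow> measure F (box (c j))"
      using g by (intro box_conv[OF H FN]) auto
    have c2: "(\<lambda>n. measure (Fs n) ?U) \<longlonglongrightarrow> measure F ?U"
      using insert(3) g by auto
    have c3: "(\<lambda>n. measure (Fs n) (\<Union>i\<in>I. box (vmin (c j) (c i)))) \<longlonglongrightarrow>
        measure F (\<Union>i\<in>I. box (vmin (c j) (c i)))"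
      using insert(3)[rule_format, of "\<lambda>i. vmin (c j) (c i)"] g by (auto intro: good_vmin)
    show "(\<lambda>n. measure (Fs n) (\<Union>i\<in>insert j I. box (c i))) \<longlonglongrightarrow> measure F (\<Union>i\<in>insert j I. box (c i))"
      unfolding eq meas[OF H(1)] meas[OF H(2)] by (intro tendsto_intros c1 c2 c3)
  qed
qed

definition vupd :: "real^'n::finite \<Rightarrow> 'n \<Rightarrow> real \<Rightarrow> real^'n" where
  "vupd u i v = (\<chi> k. if k = i then v else u $ k)"

definition cell :: "real^'n::finite \<Rightarrow> real^'n \<Rightarrow> (real^'n) set" where
  "cell l u = {y. \<forall>i. l $ i < y $ i \<and> y $ i \<le> u $ i}"

lemma box_vupd: "y \<in> box (vupd u i v) \<longleftrightarrow> y $ i \<le> v \<and> (\<forall>k. k \<noteq> i \<longrightarrow> y $ k \<le> u $ k)"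
proof -
  have "y \<in> box (vupd u i v) \<longleftrightarrow> (\<forall>k. y $ k \<le> (if k = i then v else u $ k))"
    unfolding box_def vupd_def by simp
  also have "\<dots> \<longleftrightarrow> y $ i \<le> v \<and> (\<forall>k. k \<noteq> i \<longrightarrow> y $ k \<le> u $ k)"
    by (metis (full_types))
  finally show ?thesis .
qed

lemma cell_eq: "cell l u = box u - (\<Union>i. box (vupd u i (l $ i)))"
proof (intro set_eqI)
  fix y
  show "y \<in> cell l u \<longleftrightarrow> y \<in> box u - (\<Union>i. box (vupd u i (l $ i)))"
  proof -
    have h: "y \<in> (\<Union>i. box (vupd u i (l $ i))) \<longleftrightarrow> (\<exists>i. y $ i \<le> l $ i \<and> (\<forall>k. k \<noteq> i \<longrightarrow> y $ k \<le> u $ k))"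
      using box_vupd by blast
    show ?thesis unfolding Diff_iff h unfolding cell_def box_def
      by (auto simp: not_le) (meson not_le)
  qed
qed

lemma cell_borel[measurable]: "cell l u \<in> sets borel"
  unfolding cell_def by measurable

definition goodc :: "(real^'n::finite) measure \<Rightarrow> 'n \<Rightarrow> real \<Rightarrow> bool" where
  "goodc F i a \<longleftrightarrow> a < 0 \<or> (0 < a \<and> measure F {y. y $ i = a} = 0)"

lemma good_goodc: "good F c \<longleftrightarrow> (\<forall>i. goodc F i (c $ i))"
  unfolding good_def goodc_def ..

lemma cell_conv:
  fixes Fs :: "nat \<Rightarrow> (real ^ 'n::finite) measure" and F :: "(real ^ 'n) measure"
  assumes H: "\<And>n. condH (Fs n)" "condH F"
    and FN: "\<forall>x0 x. (\<lambda>n. Fnorm (Fs n) x0 x) \<longlonglongrightarrow> Fnorm F x0 x"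
    and gl: "\<And>i. goodc F i (l $ i)" and gu: "\<And>i. goodc F i (u $ i)"
  shows "(\<lambda>n. measure (Fs n) (cell l u)) \<longlonglongrightarrow> measure F (cell l u)"
proof -
  let ?U = "\<Union>i. box (vupd u i (l $ i))"
  have gu': "good F u" using gu good_goodc by blast
  have gv: "good F (vupd u i (l $ i))" for i
    unfolding good_goodc vupd_def using gl gu by auto
  have meas: "measure P (cell l u) = measure P (box u) - measure P (\<Union>i. box (vmin u (vupd u i (l $ i))))"
    if "condH P" for P
  proof -
    interpret prob_space P using condH_D(1)[OF that] .
    have s1: "box u \<in> sets P" using condH_sets[OF that] by auto
    have s2: "?U \<in> sets P" using condH_sets[OF that] by auto
    have "box u \<inter> ?U = (\<Union>i. box (vmin u (vupd u i (l $ i))))" using box_Int by auto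
    then show ?thesis unfolding cell_eq using finite_measure_Diff'[OF s1 s2] by simp
  qed
  have c1: "(\<lambda>n. measure (Fs n) (box u)) \<longlonglongrightarrow> measure F (box u)"
    by (rule box_conv[OF H FN gu'])
  have c2: "(\<lambda>n. measure (Fs n) (\<Union>i\<in>UNIV. box (vmin u (vupd u i (l $ i))))) \<longlonglongrightarrow>
      measure F (\<Union>i\<in>UNIV. box (vmin u (vupd u i (l $ i))))"
    using union_conv[OF H FN, of "UNIV::'n set", simplified, rule_format, of "\<lambda>i. vmin u (vupd u i (l $ i))"] gu' gv by (auto intro: good_vmin)
  show ?thesis unfolding meas[OF H(1)] meas[OF H(2)] by (intro tendsto_intros c1 c2)
qed

lemma exists_nonatom:
  assumes "condH F" "a < b"
  shows "\<exists>t. a < t \<and> t < b \<and> measure F {y. y $ i = t} = 0"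
proof -
  interpret F: prob_space F using condH_D(1)[OF assms(1)] .
  let ?D = "distr F borel (\<lambda>y. y $ i)"
  interpret D: prob_space ?D
    using condH_meas[OF assms(1) vec_nth_borel] by (intro F.prob_space_distr) auto
  have "countable {t. measure ?D {t} \<noteq> 0}" by (rule D.countable_support)
  moreover have "measure ?D {t} = measure F {y. y $ i = t}" for t
    using condH_meas[OF assms(1) vec_nth_borel] condH_D(3)[OF assms(1)]
    by (subst measure_distr) (auto simp: vimage_def)
  ultimately have cnt: "countable {t. measure F {y. y $ i = t} \<noteq> 0}" by simp
  have "uncountable {a<..<b}" using assms(2) by (simp add: uncountable_open_interval)
  then have "\<not> {a<..<b} \<subseteq> {t. measure F {y. y $ i = t} \<noteq> 0}"
    using cnt countable_subset by blast
  then show ?thesis by auto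
qed


lemma sum_ind_in:
  assumes "finite K" "\<And>k k'. k \<in> K \<Longrightarrow> k' \<in> K \<Longrightarrow> k \<noteq> k' \<Longrightarrow> C k \<inter> C k' = {}"
    "kz \<in> K" "x \<in> C kz"
  shows "(\<Sum>k\<in>K. c k * indicator (C k) x) = (c kz :: real)"
proof -
  have "(\<Sum>k\<in>K. c k * indicator (C k) x) = c kz * indicator (C kz) x + (\<Sum>k\<in>K - {kz}. c k * indicator (C k) x)"
    by (rule sum.remove[OF assms(1,3)])
  also have "(\<Sum>k\<in>K - {kz}. c k * indicator (C k) x) = 0"
    using assms(2,3,4) by (intro sum.neutral) (auto simp: indicator_def)
  finally show ?thesis using assms(4) by simp
qed

lemma sum_ind_out:
  assumes "\<And>k. k \<in> K \<Longrightarrow> x \<notin> C k"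
  shows "(\<Sum>k\<in>K. c k * indicator (C k) x) = (0::real)"
  using assms by (intro sum.neutral) auto

lemma sum_ind_bounds:
  assumes "finite K" "\<And>k k'. k \<in> K \<Longrightarrow> k' \<in> K \<Longrightarrow> k \<noteq> k' \<Longrightarrow> C k \<inter> C k' = {}"
    "\<And>k. k \<in> K \<Longrightarrow> 0 \<le> c k \<and> c k \<le> (1::real)"
  shows "0 \<le> (\<Sum>k\<in>K. c k * indicator (C k) x)" "(\<Sum>k\<in>K. c k * indicator (C k) x) \<le> 1"
proof -
  have "0 \<le> (\<Sum>k\<in>K. c k * indicator (C k) x) \<and> (\<Sum>k\<in>K. c k * indicator (C k) x) \<le> 1"
  proof (cases "\<exists>k\<in>K. x \<in> C k")
    case True
    then obtain kz where "kz \<in> K" "x \<in> C kz" by auto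
    then show ?thesis using sum_ind_in[OF assms(1,2), where kz=kz and x=x and c=c] assms(3) by auto
  next
    case False
    then show ?thesis using sum_ind_out[of K x C c] by auto
  qed
  then show "0 \<le> (\<Sum>k\<in>K. c k * indicator (C k) x)" "(\<Sum>k\<in>K. c k * indicator (C k) x) \<le> 1" by auto
qed

lemma integral_sep:
  fixes P Q :: "(real^'n::finite) measure" and g1 g2 :: "real^'n \<Rightarrow> real"
  assumes P: "condH P" and Q: "condH Q"
    and g1: "integrable P g1" "\<And>x. 0 \<le> g1 x" and g2: "integrable Q g2" "\<And>y. 0 \<le> g2 y"
  shows "integrable (P \<Otimes>\<^sub>M Q) (\<lambda>z. g1 (fst z) * g2 (snd z))"
    "integral\<^sup>L (P \<Otimes>\<^sub>M Q) (\<lambda>z. g1 (fst z) * g2 (snd z)) = integral\<^sup>L P g1 * integral\<^sup>L Q g2"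
proof -
  interpret P: prob_space P using condH_D(1)[OF P] .
  interpret Q: prob_space Q using condH_D(1)[OF Q] .
  interpret PQ: pair_sigma_finite P Q ..
  have m1[measurable]: "g1 \<in> borel_measurable P" using g1 by auto
  have m2[measurable]: "g2 \<in> borel_measurable Q" using g2 by auto
  have "(\<integral>\<^sup>+z. ennreal (g1 (fst z) * g2 (snd z)) \<partial>(P \<Otimes>\<^sub>M Q))
      = (\<integral>\<^sup>+x. \<integral>\<^sup>+y. ennreal (g1 x) * ennreal (g2 y) \<partial>Q \<partial>P)"
    by (subst Q.nn_integral_fst[symmetric]) (auto simp: ennreal_mult g1(2) g2(2))
  also have "\<dots> = (\<integral>\<^sup>+x. ennreal (g1 x) * (\<integral>\<^sup>+y. ennreal (g2 y) \<partial>Q) \<partial>P)"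
    by (subst nn_integral_cmult) auto
  also have "\<dots> = (\<integral>\<^sup>+x. ennreal (g1 x) \<partial>P) * (\<integral>\<^sup>+y. ennreal (g2 y) \<partial>Q)"
    by (subst nn_integral_multc) auto
  also have "\<dots> = ennreal (integral\<^sup>L P g1) * ennreal (integral\<^sup>L Q g2)"
    using g1 g2 by (simp add: nn_integral_eq_integral)
  also have "\<dots> = ennreal (integral\<^sup>L P g1 * integral\<^sup>L Q g2)"
    using g1 g2 by (simp add: ennreal_mult)
  finally have eq: "(\<integral>\<^sup>+z. ennreal (g1 (fst z) * g2 (snd z)) \<partial>(P \<Otimes>\<^sub>M Q)) = ennreal (integral\<^sup>L P g1 * integral\<^sup>L Q g2)" .
  have nn: "0 \<le> integral\<^sup>L P g1 * integral\<^sup>L Q g2" using g1 g2 by simp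
  have "integrable (P \<Otimes>\<^sub>M Q) (\<lambda>z. g1 (fst z) * g2 (snd z)) \<and>
      integral\<^sup>L (P \<Otimes>\<^sub>M Q) (\<lambda>z. g1 (fst z) * g2 (snd z)) = integral\<^sup>L P g1 * integral\<^sup>L Q g2"
    using eq nn g1(2) g2(2) by (subst nn_integral_eq_integrable[symmetric]) auto
  then show "integrable (P \<Otimes>\<^sub>M Q) (\<lambda>z. g1 (fst z) * g2 (snd z))"
    "integral\<^sup>L (P \<Otimes>\<^sub>M Q) (\<lambda>z. g1 (fst z) * g2 (snd z)) = integral\<^sup>L P g1 * integral\<^sup>L Q g2" by auto
qed


definition mm :: "(real^'n::finite) measure \<Rightarrow> (real^'n) measure \<Rightarrow> ('k \<Rightarrow> (real^'n) set) \<Rightarrow> 'k \<Rightarrow> real" where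
  "mm P Q C k = min (measure P (C k)) (measure Q (C k))"

definition alpha :: "(real^'n::finite) measure \<Rightarrow> (real^'n) measure \<Rightarrow> 'k set \<Rightarrow> ('k \<Rightarrow> (real^'n) set) \<Rightarrow> real^'n \<Rightarrow> real" where
  "alpha P Q K C x = 1 - (\<Sum>k\<in>K. mm P Q C k / measure P (C k) * indicator (C k) x)"

definition rr :: "(real^'n::finite) measure \<Rightarrow> (real^'n) measure \<Rightarrow> 'k set \<Rightarrow> ('k \<Rightarrow> (real^'n) set) \<Rightarrow> real" where
  "rr P Q K C = 1 - (\<Sum>k\<in>K. mm P Q C k)"

definition fc :: "(real^'n::finite) measure \<Rightarrow> (real^'n) measure \<Rightarrow> 'k set \<Rightarrow> ('k \<Rightarrow> (real^'n) set) \<Rightarrow> real^'n \<Rightarrow> real^'n \<Rightarrow> real" where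
  "fc P Q K C x y = (\<Sum>k\<in>K. mm P Q C k / (measure P (C k) * measure Q (C k)) * (indicator (C k) x * indicator (C k) y))
     + alpha P Q K C x * alpha Q P K C y / rr P Q K C"

lemma mm_sym: "mm Q P C k = mm P Q C k"
  unfolding mm_def by (simp add: min.commute)

lemma rr_sym: "rr Q P K C = rr P Q K C"
  unfolding rr_def by (simp add: mm_sym[of Q P])

lemma fc_swap: "fc Q P K C y x = fc P Q K C x y"
  unfolding fc_def by (simp add: mm_sym[of Q P] rr_sym[of Q P] ac_simps)

lemma mm_nonneg: "0 \<le> mm P Q C k" unfolding mm_def by simp
lemma mm_le1: "mm P Q C k \<le> measure P (C k)" unfolding mm_def by simp
lemma mm_le2: "mm P Q C k \<le> measure Q (C k)" unfolding mm_def by simp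

lemma mm_coef: "0 \<le> mm P Q C k / measure P (C k) \<and> mm P Q C k / measure P (C k) \<le> 1"
  using mm_nonneg[of P Q C k] mm_le1[of P Q C k] by (cases "measure P (C k) = 0") (auto simp: divide_le_eq_1)

lemma mm_coef_mult: "mm P Q C k / measure P (C k) * measure P (C k) = mm P Q C k"
  using mm_nonneg[of P Q C k] mm_le1[of P Q C k] by (cases "measure P (C k) = 0") auto

lemma mm_w_mult: "mm P Q C k / (measure P (C k) * measure Q (C k)) * measure Q (C k) = mm P Q C k / measure P (C k)"
  using mm_nonneg[of P Q C k] mm_le2[of P Q C k] by (cases "measure Q (C k) = 0") auto

lemma mm_w_mult2: "mm P Q C k / (measure P (C k) * measure Q (C k)) * (measure P (C k) * measure Q (C k)) = mm P Q C k"
  using mm_nonneg[of P Q C k] mm_le2[of P Q C k] mm_le1[of P Q C k]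
  by (cases "measure P (C k) * measure Q (C k) = 0") auto

locale cellsys =
  fixes K :: "'k set" and C :: "'k \<Rightarrow> (real^'n::finite) set"
  assumes finK: "finite K" and Cb[measurable]: "\<And>k. C k \<in> sets borel"
    and disj: "\<And>k k'. k \<in> K \<Longrightarrow> k' \<in> K \<Longrightarrow> k \<noteq> k' \<Longrightarrow> C k \<inter> C k' = {}"
begin

lemma alpha_bounds: "0 \<le> alpha P Q K C x" "alpha P Q K C x \<le> 1"
proof -
  have b: "\<And>k. k \<in> K \<Longrightarrow> 0 \<le> mm P Q C k / measure P (C k) \<and> mm P Q C k / measure P (C k) \<le> 1"
    by (rule mm_coef)
  show "0 \<le> alpha P Q K C x" "alpha P Q K C x \<le> 1"
    unfolding alpha_def using sum_ind_bounds(1)[where K=K and C=C and x=x, OF finK _ b] sum_ind_bounds(2)[where K=K and C=C and x=x, OF finK _ b] disj by auto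
qed

lemma alpha_borel[measurable]: "alpha P Q K C \<in> borel_measurable borel"
proof -
  have "(\<lambda>x. alpha P Q K C x) \<in> borel_measurable borel" unfolding alpha_def by measurable
  then show ?thesis by simp
qed

lemma alpha_int:
  assumes P: "condH P"
  shows "integrable P (alpha P Q K C)" "integral\<^sup>L P (alpha P Q K C) = rr P Q K C"
proof -
  interpret P: prob_space P using condH_D(1)[OF P] .
  have ind: "integrable P (indicator (C k) :: _ \<Rightarrow> real)" for k
    using condH_sets[OF P Cb[of k]] by (intro integrable_real_indicator) (auto simp: P.emeasure_eq_measure)
  have i1: "integrable P (\<lambda>x. mm P Q C k / measure P (C k) * indicator (C k) x)" for k
    using ind by auto
  have "integrable P (\<lambda>x. 1 - (\<Sum>k\<in>K. mm P Q C k / measure P (C k) * indicator (C k) x))"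
    using i1 by (intro Bochner_Integration.integrable_diff Bochner_Integration.integrable_sum) auto
  then show ii: "integrable P (alpha P Q K C)" unfolding alpha_def[abs_def] .
  have sp: "C k \<inter> space P = C k" for k using condH_D(3)[OF P] by auto
  have "integral\<^sup>L P (alpha P Q K C) = 1 - (\<Sum>k\<in>K. mm P Q C k / measure P (C k) * measure P (C k))"
    unfolding alpha_def[abs_def] using i1 ind
    by (subst Bochner_Integration.integral_diff) (auto simp: Bochner_Integration.integral_sum sp P.prob_space)
  also have "\<dots> = rr P Q K C" unfolding rr_def mm_coef_mult ..
  finally show "integral\<^sup>L P (alpha P Q K C) = rr P Q K C" .
qed

lemma rr_nonneg:
  assumes P: "condH P" shows "0 \<le> rr P Q K C"
  using alpha_int[OF P, of Q] alpha_bounds by (metis Bochner_Integration.integral_nonneg)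

lemma alpha_sum: "(\<Sum>k\<in>K. mm P Q C k / measure P (C k) * indicator (C k) x) = 1 - alpha P Q K C x"
  unfolding alpha_def by simp

lemma fc_nonneg:
  assumes P: "condH P" shows "0 \<le> fc P Q K C x y"
proof -
  have "0 \<le> mm P Q C k / (measure P (C k) * measure Q (C k))" for k
    using mm_nonneg[of P Q C k] by (intro divide_nonneg_nonneg) auto
  then show ?thesis
    unfolding fc_def using rr_nonneg[OF P] alpha_bounds
    by (intro add_nonneg_nonneg sum_nonneg divide_nonneg_nonneg mult_nonneg_nonneg) (auto simp: mm_nonneg)
qed

lemma fc_borel[measurable]: "(\<lambda>z. fc P Q K C (fst z) (snd z)) \<in> borel_measurable borel"
proof -
  have "(\<lambda>z. fc P Q K C (fst z) (snd z)) \<in> borel_measurable (borel \<Otimes>\<^sub>M borel)"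
    unfolding fc_def by measurable
  then show ?thesis by (simp only: borel_prod)
qed

lemma marg1:
  assumes P: "condH P" and Q: "condH Q"
  shows "AE x in P. (\<integral>\<^sup>+y. ennreal (fc P Q K C x y) \<partial>Q) = 1"
proof -
  interpret Q: prob_space Q using condH_D(1)[OF Q] .
  let ?r = "rr P Q K C"
  have indQ: "integrable Q (indicator (C k) :: _ \<Rightarrow> real)" for k
    using condH_sets[OF Q Cb[of k]] by (intro integrable_real_indicator) (auto simp: Q.emeasure_eq_measure)
  have sp: "C k \<inter> space Q = C k" for k using condH_D(3)[OF Q] by auto
  have val: "integral\<^sup>L Q (fc P Q K C x) = (1 - alpha P Q K C x) + alpha P Q K C x / ?r * ?r"
    and int: "integrable Q (fc P Q K C x)" for x
  proof -
    have e: "fc P Q K C x = (\<lambda>y. (\<Sum>k\<in>K. (mm P Q C k / (measure P (C k) * measure Q (C k)) * indicator (C k) x) * indicator (C k) y)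
       + (alpha P Q K C x / ?r) * alpha Q P K C y)"
      unfolding fc_def by (auto simp: mult.assoc)
    have i1: "integrable Q (\<lambda>y. (\<Sum>k\<in>K. (mm P Q C k / (measure P (C k) * measure Q (C k)) * indicator (C k) x) * indicator (C k) y))"
      using indQ by (intro Bochner_Integration.integrable_sum) auto
    have i2: "integrable Q (\<lambda>y. (alpha P Q K C x / ?r) * alpha Q P K C y)"
      using alpha_int(1)[OF Q, of P] by auto
    show "integrable Q (fc P Q K C x)" unfolding e using i1 i2 by auto
    have "integral\<^sup>L Q (fc P Q K C x) = integral\<^sup>L Q (\<lambda>y. (\<Sum>k\<in>K. (mm P Q C k / (measure P (C k) * measure Q (C k)) * indicator (C k) x) * indicator (C k) y))
       + integral\<^sup>L Q (\<lambda>y. (alpha P Q K C x / ?r) * alpha Q P K C y)"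
      unfolding e by (rule Bochner_Integration.integral_add[OF i1 i2])
    also have "integral\<^sup>L Q (\<lambda>y. (\<Sum>k\<in>K. (mm P Q C k / (measure P (C k) * measure Q (C k)) * indicator (C k) x) * indicator (C k) y))
       = (\<Sum>k\<in>K. integral\<^sup>L Q (\<lambda>y. (mm P Q C k / (measure P (C k) * measure Q (C k)) * indicator (C k) x) * indicator (C k) y))"
      by (rule Bochner_Integration.integral_sum) (use indQ in auto)
    also have "\<dots> = (\<Sum>k\<in>K. (mm P Q C k / (measure P (C k) * measure Q (C k)) * indicator (C k) x) * measure Q (C k))"
      by (intro sum.cong refl) (simp only: integral_mult_right_zero Bochner_Integration.integral_indicator sp)
    also have "integral\<^sup>L Q (\<lambda>y. (alpha P Q K C x / ?r) * alpha Q P K C y) = (alpha P Q K C x / ?r) * ?r"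
      using alpha_int(2)[OF Q, of P] by (simp only: integral_mult_right_zero rr_sym)
    also have "(\<Sum>k\<in>K. (mm P Q C k / (measure P (C k) * measure Q (C k)) * indicator (C k) x) * measure Q (C k))
       = (\<Sum>k\<in>K. mm P Q C k / measure P (C k) * indicator (C k) x)"
    proof (intro sum.cong refl)
      fix k
      have "(mm P Q C k / (measure P (C k) * measure Q (C k)) * indicator (C k) x) * measure Q (C k)
        = (mm P Q C k / (measure P (C k) * measure Q (C k)) * measure Q (C k)) * indicator (C k) x"
        by (simp only: ac_simps)
      also have "\<dots> = mm P Q C k / measure P (C k) * indicator (C k) x" by (simp only: mm_w_mult)
      finally show "(mm P Q C k / (measure P (C k) * measure Q (C k)) * indicator (C k) x) * measure Q (C k)
        = mm P Q C k / measure P (C k) * indicator (C k) x" .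
    qed
    finally show "integral\<^sup>L Q (fc P Q K C x) = (1 - alpha P Q K C x) + alpha P Q K C x / ?r * ?r"
      unfolding alpha_sum .
  qed
  have ae: "AE x in P. alpha P Q K C x / ?r * ?r = alpha P Q K C x"
  proof (cases "?r = 0")
    case True
    have "AE x in P. alpha P Q K C x = 0"
      using alpha_int[OF P, of Q] True alpha_bounds
      by (subst integral_nonneg_eq_0_iff_AE[symmetric]) auto
    then show ?thesis by eventually_elim simp
  next
    case False then show ?thesis by simp
  qed
  then show ?thesis
  proof eventually_elim
    case (elim x)
    have "(\<integral>\<^sup>+y. ennreal (fc P Q K C x y) \<partial>Q) = ennreal (integral\<^sup>L Q (fc P Q K C x))"
      by (rule nn_integral_eq_integral[OF int]) (rule AE_I2, rule fc_nonneg[OF P])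
    also have "\<dots> = 1" unfolding val[of x] elim by simp
    finally show ?case .
  qed
qed


lemma coupling_in:
  assumes P: "condH P" and Q: "condH Q"
  shows "density (P \<Otimes>\<^sub>M Q) (\<lambda>z. ennreal (fc P Q K C (fst z) (snd z))) \<in> couplings P Q"
proof (rule coupling_density)
  show "prob_space P" "sets P = sets borel" using condH_D[OF P] by auto
  show "prob_space Q" "sets Q = sets borel" using condH_D[OF Q] by auto
  show "(\<lambda>z. fc P Q K C (fst z) (snd z)) \<in> borel_measurable borel" by (rule fc_borel)
  show "\<And>z. 0 \<le> fc P Q K C (fst z) (snd z)" by (rule fc_nonneg[OF P])
  show "AE x in P. (\<integral>\<^sup>+y. ennreal (fc P Q K C (fst (x, y)) (snd (x, y))) \<partial>Q) = 1"
    using marg1[OF P Q] by simp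
  show "AE y in Q. (\<integral>\<^sup>+x. ennreal (fc P Q K C (fst (x, y)) (snd (x, y))) \<partial>P) = 1"
    using marg1[OF Q P] by (simp add: fc_swap)
qed

lemma alpha_l1_int:
  assumes P: "condH P"
  shows "integrable P (\<lambda>x. alpha P Q K C x * l1norm x)"
proof (rule Bochner_Integration.integrable_bound[OF condH_int_l1[OF P]])
  show "(\<lambda>x. alpha P Q K C x * l1norm x) \<in> borel_measurable P"
    using condH_meas[OF P] by (intro borel_measurable_times) (auto intro: condH_meas[OF P])
  show "AE x in P. norm (alpha P Q K C x * l1norm x) \<le> norm (l1norm x)"
    using alpha_bounds[of P Q x for x] l1norm_nonneg
    by (intro AE_I2) (auto simp: abs_mult intro!: mult_left_le_one_le)
qed

lemma cost_bound:
  assumes P: "condH P" and Q: "condH Q"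
    and diam: "\<And>k x y. k \<in> K \<Longrightarrow> x \<in> C k \<Longrightarrow> y \<in> C k \<Longrightarrow> l1norm (x - y) \<le> D" and D: "0 \<le> D"
  shows "wasserstein P Q \<le> D + integral\<^sup>L P (\<lambda>x. alpha P Q K C x * l1norm x)
      + integral\<^sup>L Q (\<lambda>y. alpha Q P K C y * l1norm y)"
proof -
  interpret P: prob_space P using condH_D(1)[OF P] .
  interpret Q: prob_space Q using condH_D(1)[OF Q] .
  interpret PQ: pair_sigma_finite P Q ..
  define M where "M = density (P \<Otimes>\<^sub>M Q) (\<lambda>z. ennreal (fc P Q K C (fst z) (snd z)))"
  have Mc: "M \<in> couplings P Q" unfolding M_def by (rule coupling_in[OF P Q])
  have sPQ: "sets (P \<Otimes>\<^sub>M Q) = sets borel" using condH_D(2)[OF P] condH_D(2)[OF Q] by (intro sets_pair_borel) auto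
  have measPQ: "f \<in> borel_measurable (P \<Otimes>\<^sub>M Q)" if "f \<in> borel_measurable borel" for f :: "(real^'n) \<times> (real^'n) \<Rightarrow> real"
    unfolding measurable_cong_sets[OF sPQ refl] by (rule that)
  let ?a = "\<lambda>k. measure P (C k)" and ?b = "\<lambda>k. measure Q (C k)"
  let ?w = "\<lambda>k. mm P Q C k / (?a k * ?b k)"
  let ?r = "rr P Q K C"
  let ?al = "alpha P Q K C" and ?be = "alpha Q P K C"
  let ?Ia = "integral\<^sup>L P (\<lambda>x. ?al x * l1norm x)" and ?Ib = "integral\<^sup>L Q (\<lambda>y. ?be y * l1norm y)"
  define G where "G z = (\<Sum>k\<in>K. (?w k * D) * (indicator (C k) (fst z) * indicator (C k) (snd z)))
     + (1 / ?r) * ((?al (fst z) * l1norm (fst z)) * ?be (snd z))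
     + (1 / ?r) * (?al (fst z) * (?be (snd z) * l1norm (snd z)))" for z
  have r0: "0 \<le> ?r" by (rule rr_nonneg[OF P])
  have w0: "0 \<le> ?w k" for k using mm_nonneg[of P Q C k] by (intro divide_nonneg_nonneg) auto
  have indP: "integrable P (indicator (C k) :: _ \<Rightarrow> real)" for k
    using condH_sets[OF P Cb[of k]] by (intro integrable_real_indicator) (auto simp: P.emeasure_eq_measure)
  have indQ: "integrable Q (indicator (C k) :: _ \<Rightarrow> real)" for k
    using condH_sets[OF Q Cb[of k]] by (intro integrable_real_indicator) (auto simp: Q.emeasure_eq_measure)
  have spP: "C k \<inter> space P = C k" for k using condH_D(3)[OF P] by auto
  have spQ: "C k \<inter> space Q = C k" for k using condH_D(3)[OF Q] by auto
  have l1a: "integrable P (\<lambda>x. ?al x * l1norm x)" by (rule alpha_l1_int[OF P])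
  have l1b: "integrable Q (\<lambda>y. ?be y * l1norm y)" by (rule alpha_l1_int[OF Q])
  have ia: "integrable P ?al" "integral\<^sup>L P ?al = ?r" using alpha_int[OF P, of Q] by auto
  have ib: "integrable Q ?be" "integral\<^sup>L Q ?be = ?r" using alpha_int[OF Q, of P] by (auto simp: rr_sym)
  have nn1a: "0 \<le> ?al x * l1norm x" for x
    by (intro mult_nonneg_nonneg alpha_bounds l1norm_nonneg)
  have nn1b: "0 \<le> ?be x * l1norm x" for x
    by (intro mult_nonneg_nonneg alpha_bounds l1norm_nonneg)
  note nn1 = nn1a nn1b
  note s1 = integral_sep[OF P Q indP _ indQ]
  note s2 = integral_sep[OF P Q l1a nn1(1) ib(1) alpha_bounds(1)]
  note s3 = integral_sep[OF P Q ia(1) alpha_bounds(1) l1b nn1(2)]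
  have iG: "integrable (P \<Otimes>\<^sub>M Q) G"
    unfolding G_def[abs_def]
    using s1(1) s2(1) s3(1)
    by (intro Bochner_Integration.integrable_add Bochner_Integration.integrable_sum integrable_mult_right) auto
  have "integral\<^sup>L (P \<Otimes>\<^sub>M Q) G = (\<Sum>k\<in>K. (?w k * D) * (?a k * ?b k)) + (1 / ?r) * (?Ia * ?r) + (1 / ?r) * (?r * ?Ib)"
    unfolding G_def[abs_def] using s1 s2 s3 ia ib
    by (simp add: Bochner_Integration.integral_add Bochner_Integration.integral_sum spP spQ
        Bochner_Integration.integrable_sum)
  also have "(\<Sum>k\<in>K. (?w k * D) * (?a k * ?b k)) = D * (\<Sum>k\<in>K. mm P Q C k)"
  proof -
    have "(?w k * D) * (?a k * ?b k) = D * mm P Q C k" for k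
    proof -
      have "(?w k * D) * (?a k * ?b k) = D * (?w k * (?a k * ?b k))" by (simp only: mult_ac)
      also have "\<dots> = D * mm P Q C k" by (simp only: mm_w_mult2)
      finally show ?thesis .
    qed
    then show ?thesis by (simp add: sum_distrib_left)
  qed
  also have "D * (\<Sum>k\<in>K. mm P Q C k) \<le> D"
    using r0 D unfolding rr_def by (simp add: mult_left_le)
  finally have h1: "integral\<^sup>L (P \<Otimes>\<^sub>M Q) G \<le> D + (1 / ?r) * (?Ia * ?r) + (1 / ?r) * (?r * ?Ib)" by simp
  have h2: "(1 / ?r) * (?Ia * ?r) + (1 / ?r) * (?r * ?Ib) \<le> ?Ia + ?Ib"
  proof (cases "?r = 0")
    case True
    have "0 \<le> ?Ia" "0 \<le> ?Ib" using nn1 by (auto intro: Bochner_Integration.integral_nonneg)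
    then show ?thesis using True by simp
  next
    case False then show ?thesis by simp
  qed
  have Gle: "integral\<^sup>L (P \<Otimes>\<^sub>M Q) G \<le> D + ?Ia + ?Ib" using h1 h2 by linarith
  have pt: "fc P Q K C x y * cost (x, y) \<le> G (x, y)" for x y
  proof -
    have "fc P Q K C x y * cost (x, y) = (\<Sum>k\<in>K. ?w k * (indicator (C k) x * indicator (C k) y) * cost (x, y))
        + (?al x * ?be y / ?r) * cost (x, y)"
      unfolding fc_def by (simp add: distrib_right sum_distrib_right)
    also have "(\<Sum>k\<in>K. ?w k * (indicator (C k) x * indicator (C k) y) * cost (x, y))
        \<le> (\<Sum>k\<in>K. (?w k * D) * (indicator (C k) x * indicator (C k) y))"
    proof (rule sum_mono)
      fix k assume k: "k \<in> K"
      show "?w k * (indicator (C k) x * indicator (C k) y) * cost (x, y) \<le> (?w k * D) * (indicator (C k) x * indicator (C k) y)"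
      proof (cases "x \<in> C k \<and> y \<in> C k")
        case True
        then have "cost (x, y) \<le> D" using diam[OF k, of x y] by (simp add: cost_def)
        then have "?w k * cost (x, y) \<le> ?w k * D" using w0[of k] by (rule mult_left_mono)
        then show ?thesis using True by simp
      next
        case False then show ?thesis by (auto simp: indicator_def)
      qed
    qed
    also have "(?al x * ?be y / ?r) * cost (x, y) \<le> (?al x * ?be y / ?r) * (l1norm x + l1norm y)"
      using alpha_bounds r0 l1norm_triangle[of x y]
      by (intro mult_left_mono) (auto simp: cost_def)
    also have "(?al x * ?be y / ?r) * (l1norm x + l1norm y)
       = (1 / ?r) * ((?al x * l1norm x) * ?be y) + (1 / ?r) * (?al x * (?be y * l1norm y))"
      by (simp add: field_simps add_divide_distrib)
    finally show ?thesis unfolding G_def by simp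
  qed
  have costM: "cost \<in> borel_measurable M"
    using Mc unfolding couplings_def using measurable_cong_sets[of M borel borel borel] cost_borel by auto
  have "(\<integral>\<^sup>+z. ennreal (cost z) \<partial>M) = (\<integral>\<^sup>+z. ennreal (fc P Q K C (fst z) (snd z)) * ennreal (cost z) \<partial>(P \<Otimes>\<^sub>M Q))"
    unfolding M_def using measPQ[OF fc_borel] measPQ[OF cost_borel]
    by (intro nn_integral_density) auto
  also have "\<dots> \<le> (\<integral>\<^sup>+z. ennreal (G z) \<partial>(P \<Otimes>\<^sub>M Q))"
  proof (intro nn_integral_mono)
    fix z :: "(real^'n) \<times> (real^'n)"
    show "ennreal (fc P Q K C (fst z) (snd z)) * ennreal (cost z) \<le> ennreal (G z)"
    proof -
      have "ennreal (fc P Q K C (fst z) (snd z)) * ennreal (cost z) = ennreal (fc P Q K C (fst z) (snd z) * cost z)"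
        by (rule ennreal_mult[symmetric]) (rule fc_nonneg[OF P], rule cost_nonneg)
      also have "\<dots> \<le> ennreal (G z)" using pt[of "fst z" "snd z"] by (intro ennreal_leI) simp
      finally show ?thesis .
    qed
  qed
  also have "\<dots> = ennreal (integral\<^sup>L (P \<Otimes>\<^sub>M Q) G)"
  proof (rule nn_integral_eq_integral[OF iG], rule AE_I2)
    fix z :: "(real^'n) \<times> (real^'n)"
    show "0 \<le> G z"
      using pt[of "fst z" "snd z"] fc_nonneg[OF P, where x="fst z" and y="snd z" and Q=Q] cost_nonneg[of z]
      by (metis mult_nonneg_nonneg order_trans prod.collapse)
  qed
  also have "\<dots> \<le> ennreal (D + ?Ia + ?Ib)" using Gle by (rule ennreal_leI)
  finally have "integral\<^sup>L M cost \<le> D + ?Ia + ?Ib"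
    using D nn1 by (intro integral_le_of_nn[OF costM cost_nonneg]) (auto intro: add_nonneg_nonneg Bochner_Integration.integral_nonneg)
  then show ?thesis using wasserstein_le[OF P Q Mc] by simp
qed

end


definition onev :: "real^'n::finite" where "onev = (\<chi> i. 1)"
definition Zm :: "real^'n::finite \<Rightarrow> real" where "Zm y = Max (range (\<lambda>i. y $ i))"

lemma gF_onev: "0 \<le> R \<Longrightarrow> gF R onev y = max R (Zm y)"
  unfolding gF_def onev_def Zm_def by simp

lemma Zm_borel[measurable]: "Zm \<in> borel_measurable borel"
proof -
  have "(\<lambda>y. Max ((\<lambda>i. y $ i) ` UNIV)) \<in> borel_measurable (borel :: (real^'a) measure)"
    by (intro borel_measurable_Max) auto
  then show ?thesis unfolding Zm_def[abs_def] by simp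
qed

lemma Zm_ge: "y $ i \<le> Zm y"
  unfolding Zm_def by (intro Max_ge) auto

lemma Zm_attained: "\<exists>j. Zm y = y $ j"
proof -
  have "Zm y \<in> range (\<lambda>i. y $ i)" unfolding Zm_def by (intro Max_in) auto
  then show ?thesis by auto
qed

lemma abs_Zm_le: "\<bar>Zm y\<bar> \<le> l1norm y"
  using Zm_attained[of y] abs_comp_le_l1 by metis

lemma tail_eq:
  fixes P :: "(real^'n::finite) measure"
  assumes P: "condH P" and R: "0 \<le> R"
  shows "Fnorm P R onev - R = integral\<^sup>L P (\<lambda>y. max R (Zm y) - R)"
proof -
  interpret prob_space P using condH_D(1)[OF P] .
  have e: "gF R (onev :: real^'n) = (\<lambda>y. max R (Zm y))" by (rule ext) (rule gF_onev[OF R])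
  have i: "integrable P (\<lambda>y. max R (Zm y))"
    using condH_int_gF[OF P, of R onev] unfolding e .
  have "integral\<^sup>L P (\<lambda>y. max R (Zm y) - R) = integral\<^sup>L P (\<lambda>y. max R (Zm y)) - R"
    using i by (simp add: prob_space)
  moreover have "Fnorm P R onev = integral\<^sup>L P (\<lambda>y. max R (Zm y))"
    unfolding Fnorm_gF e ..
  ultimately show ?thesis by simp
qed

lemma tail_lim:
  assumes P: "condH P"
  shows "(\<lambda>m. Fnorm P (real m) onev - real m) \<longlonglongrightarrow> 0"
proof -
  have "(\<lambda>m. integral\<^sup>L P (\<lambda>y. max (real m) (Zm y) - real m)) \<longlonglongrightarrow> integral\<^sup>L P (\<lambda>y. 0::real)"
  proof (rule integral_dominated_convergence[where w=l1norm])
    show "(\<lambda>y. 0::real) \<in> borel_measurable P" by simp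
    show "(\<lambda>y. max (real m) (Zm y) - real m) \<in> borel_measurable P" for m
      using condH_meas[OF P Zm_borel] by measurable
    show "integrable P l1norm" by (rule condH_int_l1[OF P])
    show "AE y in P. (\<lambda>m. max (real m) (Zm y) - real m) \<longlonglongrightarrow> 0"
    proof (rule AE_I2, rule tendsto_eventually)
      fix y
      obtain N :: nat where "Zm y \<le> real N" using real_arch_simple by blast
      then show "\<forall>\<^sub>F m in sequentially. max (real m) (Zm y) - real m = 0"
        unfolding eventually_sequentially by (intro exI[of _ N]) auto
    qed
    show "AE y in P. norm (max (real m) (Zm y) - real m) \<le> l1norm y" for m
    proof (rule AE_I2)
      fix y
      have "norm (max (real m) (Zm y) - real m) \<le> \<bar>Zm y\<bar>" by (auto simp: max_def)
      then show "norm (max (real m) (Zm y) - real m) \<le> l1norm y" using abs_Zm_le[of y] by linarith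
    qed
  qed
  then show ?thesis using tail_eq[OF P] by simp
qed

definition gridv :: "(real^'n::finite) measure \<Rightarrow> real \<Rightarrow> 'n \<Rightarrow> nat \<Rightarrow> real" where
  "gridv F \<delta> i k = (if k = 0 then - \<delta> / 2 else
     (SOME t. (real k - 1) * \<delta> < t \<and> t < real k * \<delta> \<and> measure F {y. y $ i = t} = 0))"

lemma grid_props:
  assumes F: "condH F" and d: "0 < \<delta>"
  shows "(real k - 1) * \<delta> < gridv F \<delta> i k" "gridv F \<delta> i k < real k * \<delta>" "goodc F i (gridv F \<delta> i k)"
proof -
  have "(real k - 1) * \<delta> < gridv F \<delta> i k \<and> gridv F \<delta> i k < real k * \<delta> \<and> goodc F i (gridv F \<delta> i k)"
  proof (cases "k = 0")
    case True then show ?thesis using d by (simp add: gridv_def goodc_def)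
  next
    case False
    have "(real k - 1) * \<delta> < real k * \<delta>" using d by simp
    from exists_nonatom[OF F this, of i]
    have "\<exists>t. (real k - 1) * \<delta> < t \<and> t < real k * \<delta> \<and> measure F {y. y $ i = t} = 0" .
    then have s: "(real k - 1) * \<delta> < gridv F \<delta> i k \<and> gridv F \<delta> i k < real k * \<delta> \<and> measure F {y. y $ i = gridv F \<delta> i k} = 0"
      unfolding gridv_def using False by (simp only: if_False) (rule someI_ex)
    have "0 \<le> (real k - 1) * \<delta>" using False d by simp
    then show ?thesis using s unfolding goodc_def by auto
  qed
  then show "(real k - 1) * \<delta> < gridv F \<delta> i k" "gridv F \<delta> i k < real k * \<delta>" "goodc F i (gridv F \<delta> i k)" by auto
qed

lemma grid_mono:
  fixes F :: "(real^'n::finite) measure" and k k' :: nat and i :: 'n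
  assumes F: "condH F" and d: "0 < \<delta>" and kk: "k < k'"
  shows "gridv F \<delta> i k < gridv F \<delta> i k'"
proof -
  have m: "real k * \<delta> \<le> (real k' - 1) * \<delta>" using kk d by (intro mult_right_mono) auto
  have "gridv F \<delta> i k < real k * \<delta>" by (rule grid_props(2)[OF F d])
  moreover have "(real k' - 1) * \<delta> < gridv F \<delta> i k'" by (rule grid_props(1)[OF F d])
  ultimately show ?thesis using m by linarith
qed

definition cellC :: "(real^'n::finite) measure \<Rightarrow> real \<Rightarrow> ('n \<Rightarrow> nat) \<Rightarrow> (real^'n) set" where
  "cellC F \<delta> \<kappa> = cell (\<chi> i. gridv F \<delta> i (\<kappa> i - 1)) (\<chi> i. gridv F \<delta> i (\<kappa> i))"

definition Kset :: "nat \<Rightarrow> ('n::finite \<Rightarrow> nat) set" where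
  "Kset Kn = PiE UNIV (\<lambda>_. {1..Kn})"

lemma mem_cellC: "x \<in> cellC F \<delta> \<kappa> \<longleftrightarrow> (\<forall>i. gridv F \<delta> i (\<kappa> i - 1) < x $ i \<and> x $ i \<le> gridv F \<delta> i (\<kappa> i))"
  unfolding cellC_def cell_def by simp

lemma cellsys_grid:
  fixes F :: "(real^'n::finite) measure"
  assumes F: "condH F" and d: "0 < \<delta>"
  shows "cellsys (Kset Kn :: ('n \<Rightarrow> nat) set) (cellC F \<delta>)"
proof
  show "finite (Kset Kn)" unfolding Kset_def by (intro finite_PiE) auto
  show "cellC F \<delta> k \<in> sets borel" for k unfolding cellC_def by (rule cell_borel)
  fix k k' :: "'n \<Rightarrow> nat" assume k: "k \<in> Kset Kn" and k': "k' \<in> Kset Kn" and ne: "k \<noteq> k'"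
  obtain i where i: "k i \<noteq> k' i" using ne by auto
  have k1: "1 \<le> k i" "1 \<le> k' i" using k k' unfolding Kset_def by (auto simp: PiE_iff)
  show "cellC F \<delta> k \<inter> cellC F \<delta> k' = {}"
  proof (rule ccontr)
    assume "cellC F \<delta> k \<inter> cellC F \<delta> k' \<noteq> {}"
    then obtain x where x: "x \<in> cellC F \<delta> k" "x \<in> cellC F \<delta> k'" by auto
    have a: "gridv F \<delta> i (k i - 1) < x $ i" "x $ i \<le> gridv F \<delta> i (k i)"
      and b: "gridv F \<delta> i (k' i - 1) < x $ i" "x $ i \<le> gridv F \<delta> i (k' i)"
      using x unfolding mem_cellC by auto
    show False
    proof (cases "k i < k' i")
      case True
      then have "k i \<le> k' i - 1" by simp
      then have "gridv F \<delta> i (k i) \<le> gridv F \<delta> i (k' i - 1)"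
        using grid_mono[OF F d, of "k i" "k' i - 1" i] by (cases "k i = k' i - 1") auto
      then show False using a b by linarith
    next
      case False
      then have "k' i \<le> k i - 1" using i by simp
      then have "gridv F \<delta> i (k' i) \<le> gridv F \<delta> i (k i - 1)"
        using grid_mono[OF F d, of "k' i" "k i - 1" i] by (cases "k' i = k i - 1") auto
      then show False using a b by linarith
    qed
  qed
qed

lemma sum_le_card_bound:
  fixes f :: "'n::finite \<Rightarrow> real"
  assumes "\<And>i. f i \<le> B"
  shows "(\<Sum>i\<in>UNIV. f i) \<le> real CARD('n) * B"
  using sum_bounded_above[of UNIV f B] assms by simp

lemma cell_diam:
  fixes F :: "(real^'n::finite) measure"
  assumes F: "condH F" and d: "0 < \<delta>" and k: "\<kappa> \<in> Kset Kn"
    and x: "x \<in> cellC F \<delta> \<kappa>" and y: "y \<in> cellC F \<delta> \<kappa>"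
  shows "l1norm (x - y) \<le> real CARD('n) * (2 * \<delta>)"
  unfolding l1norm_def
proof (rule sum_le_card_bound)
  fix i
  have k1: "1 \<le> \<kappa> i" using k unfolding Kset_def by (auto simp: PiE_iff)
  have lo: "(real (\<kappa> i) - 2) * \<delta> < gridv F \<delta> i (\<kappa> i - 1)"
    using grid_props(1)[OF F d, of "\<kappa> i - 1" i] k1 by (simp add: of_nat_diff)
  have hi: "gridv F \<delta> i (\<kappa> i) < real (\<kappa> i) * \<delta>" by (rule grid_props(2)[OF F d])
  have "gridv F \<delta> i (\<kappa> i - 1) < x $ i" "x $ i \<le> gridv F \<delta> i (\<kappa> i)"
       "gridv F \<delta> i (\<kappa> i - 1) < y $ i" "y $ i \<le> gridv F \<delta> i (\<kappa> i)"
    using x y unfolding mem_cellC by auto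
  then show "\<bar>(x - y) $ i\<bar> \<le> 2 * \<delta>" using lo hi by (simp add: algebra_simps abs_le_iff)
qed

lemma cell_bdd:
  fixes F :: "(real^'n::finite) measure"
  assumes F: "condH F" and d: "0 < \<delta>" and k: "\<kappa> \<in> Kset Kn" and x: "x \<in> cellC F \<delta> \<kappa>"
  shows "l1norm x \<le> real CARD('n) * (real Kn * \<delta>)"
  unfolding l1norm_def
proof (rule sum_le_card_bound)
  fix i
  have k1: "1 \<le> \<kappa> i" "\<kappa> i \<le> Kn" using k unfolding Kset_def by (auto simp: PiE_iff)
  have lo: "(real (\<kappa> i) - 2) * \<delta> < gridv F \<delta> i (\<kappa> i - 1)"
    using grid_props(1)[OF F d, of "\<kappa> i - 1" i] k1 by (simp add: of_nat_diff)
  have hi: "gridv F \<delta> i (\<kappa> i) < real (\<kappa> i) * \<delta>" by (rule grid_props(2)[OF F d])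
  have "gridv F \<delta> i (\<kappa> i - 1) < x $ i" "x $ i \<le> gridv F \<delta> i (\<kappa> i)"
    using x unfolding mem_cellC by auto
  moreover have "real (\<kappa> i) * \<delta> \<le> real Kn * \<delta>" using k1 d by (intro mult_right_mono) auto
  moreover have "- \<delta> \<le> (real (\<kappa> i) - 2) * \<delta>" using k1 d by (simp add: algebra_simps)
  moreover have "\<delta> \<le> real Kn * \<delta>" using k1 d by simp
  ultimately show "\<bar>x $ i\<bar> \<le> real Kn * \<delta>" using lo hi by (simp add: abs_le_iff)
qed

lemma cell_cover:
  fixes F :: "(real^'n::finite) measure"
  assumes F: "condH F" and d: "0 < \<delta>"
    and x: "\<And>i. 0 \<le> x $ i" "\<And>i. x $ i \<le> (real Kn - 1) * \<delta>"
  shows "\<exists>\<kappa>\<in>Kset Kn. x \<in> cellC F \<delta> \<kappa>"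
proof -
  define \<kappa> where "\<kappa> i = (LEAST k. x $ i \<le> gridv F \<delta> i k)" for i
  have ex: "x $ i \<le> gridv F \<delta> i Kn" for i
    using x(2)[of i] grid_props(1)[OF F d, of Kn i] by linarith
  have le: "\<kappa> i \<le> Kn" for i unfolding \<kappa>_def by (rule Least_le) (rule ex)
  have sat: "x $ i \<le> gridv F \<delta> i (\<kappa> i)" for i unfolding \<kappa>_def by (rule LeastI) (rule ex)
  have ne0: "\<kappa> i \<noteq> 0" for i
  proof
    assume "\<kappa> i = 0"
    then have "x $ i \<le> gridv F \<delta> i 0" using sat[of i] by simp
    then show False using x(1)[of i] d by (simp add: gridv_def)
  qed
  have below: "gridv F \<delta> i (\<kappa> i - 1) < x $ i" for i
  proof -
    have "\<kappa> i - 1 < \<kappa> i" using ne0[of i] by simp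
    then have "\<not> x $ i \<le> gridv F \<delta> i (\<kappa> i - 1)" unfolding \<kappa>_def by (rule not_less_Least)
    then show ?thesis by simp
  qed
  have "\<kappa> \<in> Kset Kn" unfolding Kset_def using le ne0 by (auto simp: PiE_iff Suc_le_eq)
  moreover have "x \<in> cellC F \<delta> \<kappa>" unfolding mem_cellC using sat below by auto
  ultimately show ?thesis by blast
qed


context cellsys begin

lemma sum_in:
  assumes "kz \<in> K" "x \<in> C kz"
  shows "(\<Sum>k\<in>K. c k * indicator (C k) x) = (c kz :: real)"
  using finK disj assms by (rule sum_ind_in)

end

lemma alpha_tail_bound:
  fixes P Q F :: "(real^'n::finite) measure"
  assumes P: "condH P" and F: "condH F" and d: "0 < \<delta>" and R: "0 \<le> R"
    and Kn: "2 * R \<le> (real Kn - 1) * \<delta>"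
  shows "integral\<^sup>L P (\<lambda>x. alpha P Q (Kset Kn) (cellC F \<delta>) x * l1norm x)
    \<le> (real CARD('n) * (real Kn * \<delta>)) * (\<Sum>\<kappa>\<in>Kset Kn. \<bar>measure P (cellC F \<delta> \<kappa>) - measure Q (cellC F \<delta> \<kappa>)\<bar>)
      + 2 * real CARD('n) * (Fnorm P R onev - R)"
proof -
  interpret prob_space P using condH_D(1)[OF P] .
  interpret cs: cellsys "Kset Kn :: ('n \<Rightarrow> nat) set" "cellC F \<delta>" by (rule cellsys_grid[OF F d])
  let ?K = "Kset Kn :: ('n \<Rightarrow> nat) set" and ?C = "cellC F \<delta>"
  let ?L = "real CARD('n) * (real Kn * \<delta>)" and ?d = "real CARD('n)"
  let ?c = "\<lambda>\<kappa>. mm P Q ?C \<kappa> / measure P (?C \<kappa>)"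
  define h where "h x = ?L * (\<Sum>\<kappa>\<in>?K. (1 - ?c \<kappa>) * indicator (?C \<kappa>) x) + 2 * ?d * (max R (Zm x) - R)" for x
  have L0: "0 \<le> ?L" using d by simp
  have pt: "alpha P Q ?K ?C x * l1norm x \<le> h x" if x0: "\<And>i. 0 \<le> x $ i" for x
  proof (cases "\<exists>\<kappa>\<in>?K. x \<in> ?C \<kappa>")
    case True
    then obtain k where k: "k \<in> ?K" "x \<in> ?C k" by auto
    have al: "alpha P Q ?K ?C x = 1 - ?c k"
      using cs.sum_in[OF k, of ?c] by (simp add: alpha_def)
    have sm: "(\<Sum>\<kappa>\<in>?K. (1 - ?c \<kappa>) * indicator (?C \<kappa>) x) = 1 - ?c k"
      by (rule cs.sum_in[OF k])
    have l1: "l1norm x \<le> ?L" by (rule cell_bdd[OF F d k])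
    have c1: "0 \<le> 1 - ?c k" using mm_coef[of P Q ?C k] by simp
    have "alpha P Q ?K ?C x * l1norm x \<le> (1 - ?c k) * ?L" unfolding al using l1 c1 by (rule mult_left_mono)
    then have A: "alpha P Q ?K ?C x * l1norm x \<le> ?L * (1 - ?c k)" by (simp only: mult.commute)
    have nn: "0 \<le> 2 * ?d * (max R (Zm x) - R)" by simp
    show ?thesis unfolding h_def sm using A nn by linarith
  next
    case False
    then have nin: "\<And>\<kappa>. \<kappa> \<in> ?K \<Longrightarrow> x \<notin> ?C \<kappa>" by auto
    have al: "alpha P Q ?K ?C x = 1" unfolding alpha_def using sum_ind_out[of ?K x ?C ?c] nin by simp
    have sm: "(\<Sum>\<kappa>\<in>?K. (1 - ?c \<kappa>) * indicator (?C \<kappa>) x) = 0" using sum_ind_out[of ?K x ?C] nin by simp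
    obtain i where i: "(real Kn - 1) * \<delta> < x $ i"
      using cell_cover[OF F d x0, of Kn] False by (meson not_le)
    have Z: "2 * R < Zm x" using Zm_ge[of x i] i Kn by linarith
    have "l1norm x = (\<Sum>j\<in>UNIV. x $ j)" unfolding l1norm_def using x0 by simp
    also have "\<dots> \<le> ?d * Zm x" by (rule sum_le_card_bound) (rule Zm_ge)
    also have "\<dots> \<le> 2 * ?d * (max R (Zm x) - R)" using Z R by (simp add: max_def algebra_simps mult_left_mono)
    finally show ?thesis unfolding h_def sm al by simp
  qed
  have ae0: "AE x in P. \<forall>i. 0 \<le> x $ i"
    using AE_finite_allI[of UNIV "\<lambda>i x. 0 \<le> x $ i" P] condH_D(4)[OF P] by simp
  have indP: "integrable P (indicator (?C k) :: _ \<Rightarrow> real)" for k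
    using condH_sets[OF P cs.Cb[of k]] by (intro integrable_real_indicator) (auto simp: emeasure_eq_measure)
  have e: "gF R (onev :: real^'n) = (\<lambda>y. max R (Zm y))" by (rule ext) (rule gF_onev[OF R])
  have iZ: "integrable P (\<lambda>y. max R (Zm y))"
    using condH_int_gF[OF P, of R onev] unfolding e .
  have ih: "integrable P h"
    unfolding h_def[abs_def] using indP iZ
    by (intro Bochner_Integration.integrable_add integrable_mult_right Bochner_Integration.integrable_sum
        Bochner_Integration.integrable_diff) auto
  have spP: "?C k \<inter> space P = ?C k" for k using condH_D(3)[OF P] by auto
  have "integral\<^sup>L P (\<lambda>x. alpha P Q ?K ?C x * l1norm x) \<le> integral\<^sup>L P h"
    using ae0 pt by (intro integral_mono_AE[OF cs.alpha_l1_int[OF P] ih]) auto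
  also have "integral\<^sup>L P h = ?L * (\<Sum>\<kappa>\<in>?K. (1 - ?c \<kappa>) * measure P (?C \<kappa>)) + 2 * ?d * (Fnorm P R onev - R)"
    unfolding h_def[abs_def] tail_eq[OF P R] using indP iZ
    by (simp add: Bochner_Integration.integral_add Bochner_Integration.integral_sum spP
        Bochner_Integration.integrable_sum)
  also have "(\<Sum>\<kappa>\<in>?K. (1 - ?c \<kappa>) * measure P (?C \<kappa>)) \<le> (\<Sum>\<kappa>\<in>?K. \<bar>measure P (?C \<kappa>) - measure Q (?C \<kappa>)\<bar>)"
  proof (rule sum_mono)
    fix k
    have "(1 - ?c k) * measure P (?C k) = measure P (?C k) - mm P Q ?C k"
      using mm_coef_mult[of P Q ?C k] by (simp add: algebra_simps)
    also have "\<dots> \<le> \<bar>measure P (?C k) - measure Q (?C k)\<bar>" unfolding mm_def by (simp add: min_def)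
    finally show "(1 - ?c k) * measure P (?C k) \<le> \<bar>measure P (?C k) - measure Q (?C k)\<bar>" .
  qed
  finally show ?thesis using L0 by (smt (verit) mult_left_mono)
qed


lemma direction_forward:
  fixes Fs :: "nat \<Rightarrow> (real ^ 'n::finite) measure" and F :: "(real ^ 'n) measure"
  assumes H: "\<And>n. condH (Fs n)" "condH F"
    and FN: "\<forall>x0 x. (\<lambda>n. Fnorm (Fs n) x0 x) \<longlonglongrightarrow> Fnorm F x0 x"
  shows "(\<lambda>n. wasserstein (Fs n) F) \<longlonglongrightarrow> 0"
  unfolding tendsto_iff
proof (intro allI impI)
  fix e :: real assume e: "0 < e"
  define d where "d = real CARD('n)"
  have d0: "0 < d" unfolding d_def by simp
  have "\<forall>\<^sub>F m in sequentially. dist (Fnorm F (real m) onev - real m) 0 < e / (10 * d)"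
    using tail_lim[OF H(2)] e d0 unfolding tendsto_iff by auto
  then obtain m where m: "dist (Fnorm F (real m) onev - real m) 0 < e / (10 * d)"
    unfolding eventually_sequentially by auto
  define R where "R = real m"
  have R0: "0 \<le> R" unfolding R_def by simp
  define T where "T = Fnorm F R onev - R"
  have T: "2 * d * T < e / 5"
  proof -
    have "T < e / (10 * d)" using m unfolding T_def R_def dist_real_def by simp
    then have "2 * d * T < 2 * d * (e / (10 * d))" using d0 by (intro mult_strict_left_mono) auto
    also have "\<dots> = e / 5" using d0 by (simp add: field_simps)
    finally show ?thesis .
  qed
  define \<delta> where "\<delta> = e / (20 * d)"
  have \<delta>0: "0 < \<delta>" unfolding \<delta>_def using e d0 by simp
  define D where "D = d * (2 * \<delta>)"
  have D: "D = e / 10" "0 \<le> D" unfolding D_def \<delta>_def using d0 e by (auto simp: field_simps)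
  define Kn where "Kn = nat \<lceil>2 * R / \<delta>\<rceil> + 1"
  have Kn: "2 * R \<le> (real Kn - 1) * \<delta>"
  proof -
    have "2 * R / \<delta> \<le> real (nat \<lceil>2 * R / \<delta>\<rceil>)" by linarith
    then have "2 * R / \<delta> \<le> real Kn - 1" unfolding Kn_def by simp
    then show ?thesis using \<delta>0 by (simp add: pos_divide_le_eq)
  qed
  define K where "K = (Kset Kn :: ('n \<Rightarrow> nat) set)"
  define C where "C = cellC F \<delta>"
  interpret cs: cellsys K C unfolding K_def C_def by (rule cellsys_grid[OF H(2) \<delta>0])
  define L where "L = d * (real Kn * \<delta>)"
  have L0: "0 \<le> L" unfolding L_def using d0 \<delta>0 by simp
  define S where "S n = (\<Sum>\<kappa>\<in>K. \<bar>measure (Fs n) (C \<kappa>) - measure F (C \<kappa>)\<bar>)" for n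
  have S: "S \<longlonglongrightarrow> 0"
  proof -
    have "(\<lambda>n. S n) \<longlonglongrightarrow> (\<Sum>\<kappa>\<in>K. 0)"
      unfolding S_def
    proof (intro tendsto_sum tendsto_rabs_zero)
      fix \<kappa> assume "\<kappa> \<in> K"
      have "(\<lambda>n. measure (Fs n) (C \<kappa>)) \<longlonglongrightarrow> measure F (C \<kappa>)"
        unfolding C_def cellC_def
        by (rule cell_conv[OF H FN]) (simp_all add: grid_props(3)[OF H(2) \<delta>0])
      then show "(\<lambda>n. measure (Fs n) (C \<kappa>) - measure F (C \<kappa>)) \<longlonglongrightarrow> 0"
        by (rule LIM_zero)
    qed
    then show ?thesis by simp
  qed
  have Tn: "(\<lambda>n. 2 * d * (Fnorm (Fs n) R onev - R)) \<longlonglongrightarrow> 2 * d * T"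
    unfolding T_def using FN by (intro tendsto_intros) auto
  have bound: "wasserstein (Fs n) F \<le> D + (2 * L * S n + 2 * d * (Fnorm (Fs n) R onev - R)) + 2 * d * T" for n
  proof -
    have w: "wasserstein (Fs n) F \<le> D + integral\<^sup>L (Fs n) (\<lambda>x. alpha (Fs n) F K C x * l1norm x)
      + integral\<^sup>L F (\<lambda>y. alpha F (Fs n) K C y * l1norm y)"
    proof (rule cs.cost_bound[OF H(1)[of n] H(2) _ D(2)])
      fix k x y assume "k \<in> K" "x \<in> C k" "y \<in> C k"
      then show "l1norm (x - y) \<le> D" unfolding D_def d_def K_def C_def by (rule cell_diam[OF H(2) \<delta>0])
    qed
    have a1: "integral\<^sup>L (Fs n) (\<lambda>x. alpha (Fs n) F K C x * l1norm x) \<le> L * S n + 2 * d * (Fnorm (Fs n) R onev - R)"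
      using alpha_tail_bound[OF H(1)[of n] H(2) \<delta>0 R0 Kn, where Q=F] unfolding K_def C_def L_def S_def d_def .
    have a2: "integral\<^sup>L F (\<lambda>y. alpha F (Fs n) K C y * l1norm y) \<le> L * S n + 2 * d * T"
    proof -
      have "integral\<^sup>L F (\<lambda>y. alpha F (Fs n) K C y * l1norm y)
          \<le> L * (\<Sum>\<kappa>\<in>K. \<bar>measure F (C \<kappa>) - measure (Fs n) (C \<kappa>)\<bar>) + 2 * d * T"
        using alpha_tail_bound[OF H(2) H(2) \<delta>0 R0 Kn, where Q="Fs n"] unfolding K_def C_def L_def T_def d_def .
      also have "(\<Sum>\<kappa>\<in>K. \<bar>measure F (C \<kappa>) - measure (Fs n) (C \<kappa>)\<bar>) = S n"
        unfolding S_def by (simp add: abs_minus_commute)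
      finally show ?thesis .
    qed
    show ?thesis using w a1 a2 by linarith
  qed
  have ev1: "\<forall>\<^sub>F n in sequentially. 2 * L * S n < e / 10"
  proof -
    have "(\<lambda>n. 2 * L * S n) \<longlonglongrightarrow> 2 * L * 0" by (intro tendsto_intros S)
    then show ?thesis using e by (intro order_tendstoD(2)) auto
  qed
  have ev2: "\<forall>\<^sub>F n in sequentially. 2 * d * (Fnorm (Fs n) R onev - R) < 2 * d * T + e / 10"
    using Tn e by (intro order_tendstoD(2)) auto
  show "\<forall>\<^sub>F n in sequentially. dist (wasserstein (Fs n) F) 0 < e"
    using ev1 ev2
  proof eventually_elim
    case (elim n)
    have "0 \<le> wasserstein (Fs n) F" by (rule wasserstein_nonneg[OF H(1) H(2)])
    moreover have "wasserstein (Fs n) F < e" using bound[of n] elim D(1) T e by linarith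
    ultimately show ?case by (simp add: dist_real_def)
  qed
qed

theorem theorem3p1:
  fixes Fs :: "nat \<Rightarrow> (real ^ 'n::finite) measure"
    and F :: "(real ^ 'n) measure"
  assumes "\<And>n. condH (Fs n)"
    and "condH F"
  shows "(\<forall>x0 x. (\<lambda>n. Fnorm (Fs n) x0 x) \<longlonglongrightarrow> Fnorm F x0 x)
     \<longleftrightarrow> (\<lambda>n. wasserstein (Fs n) F) \<longlonglongrightarrow> 0"
proof
  assume "\<forall>x0 x. (\<lambda>n. Fnorm (Fs n) x0 x) \<longlonglongrightarrow> Fnorm F x0 x"
  then show "(\<lambda>n. wasserstein (Fs n) F) \<longlonglongrightarrow> 0" by (rule direction_forward[OF assms])
next
  assume W: "(\<lambda>n. wasserstein (Fs n) F) \<longlonglongrightarrow> 0"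
  show "\<forall>x0 x. (\<lambda>n. Fnorm (Fs n) x0 x) \<longlonglongrightarrow> Fnorm F x0 x"
  proof (intro allI)
    fix x0 x
    show "(\<lambda>n. Fnorm (Fs n) x0 x) \<longlonglongrightarrow> Fnorm F x0 x"
      by (rule direction_back[where Fs=Fs and F=F]) (use assms W in auto)
  qed
qed

end
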